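(* Let $(\rho,u)$ be a smooth solution with $\rho>0$ on $[0,T)\times\mathbb{T}$ of the one-dimensional topological model $$\rho_t+(\rho u)_x=0,\qquad u_t+uu_x=\int_{\mathbb{T}}\phi(x,y)(u(y)-u(x))\rho(y)\,dy,\qquad \phi(x,y)=\frac{h(|x-y|)}{|x-y|^{\alpha}d_\rho(x,y)},$$ with $0<\alpha<2$. Then $e:=u_x+\mathcal{L}_\phi\rho$ satisfies $e_t+(ue)_x=0$. Consequently $q=e/\rho$ satisfies $q_t+uq_x=0$.
   Context: $\mathbb{T}=\mathbb{R}/2\pi\mathbb{Z}$; $R_0>0$ and $h$ is a smooth even cutoff with $0\le h\le1$, $h=1$ on $[0,R_0]$, $h=0$ on $[2R_0,\infty)$. $d_\rho(x,y)=|\int_x^y\rho(t,z)\,dz|$ (time dependent through $\rho$). $\mathcal{L}_\phi f(x)=\mathrm{p.v.}\int\phi(x,y)(f(y)-f(x))\,dy$ (defined weakly by $\langle\mathcal{L}_\phi f,g\rangle=-\frac12\iint\phi(x,y)(f(x)-f(y))(g(x)-g(y))$). *)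

theory Defs
  imports "HOL-Analysis.Analysis"
begin

definition smooth_real :: "(real \<Rightarrow> real) \<Rightarrow> bool" where
  "smooth_real f \<longleftrightarrow> (\<forall>k x. ((deriv ^^ k) f) differentiable (at x))"

fun Ck2_on :: "nat \<Rightarrow> (real \<times> real) set \<Rightarrow> (real \<Rightarrow> real \<Rightarrow> real) \<Rightarrow> bool" where
  "Ck2_on 0 S f = continuous_on S (\<lambda>(t, x). f t x)"
| "Ck2_on (Suc k) S f =
     (\<exists>ft fx. (\<forall>(t, x)\<in>S. ((\<lambda>s. f s x) has_real_derivative ft t x) (at t)
                          \<and> ((\<lambda>y. f t y) has_real_derivative fx t x) (at x))
            \<and> Ck2_on k S ft \<and> Ck2_on k S fx)"

definition smooth2_on :: "(real \<times> real) set \<Rightarrow> (real \<Rightarrow> real \<Rightarrow> real) \<Rightarrow> bool" where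
  "smooth2_on S f \<longleftrightarrow> (\<forall>k. Ck2_on k S f)"

definition dt :: "(real \<Rightarrow> real \<Rightarrow> real) \<Rightarrow> real \<Rightarrow> real \<Rightarrow> real" where
  "dt f t x = deriv (\<lambda>s. f s x) t"
definition dx :: "(real \<Rightarrow> real \<Rightarrow> real) \<Rightarrow> real \<Rightarrow> real \<Rightarrow> real" where
  "dx f t x = deriv (\<lambda>y. f t y) x"

definition d_rho :: "(real \<Rightarrow> real \<Rightarrow> real) \<Rightarrow> real \<Rightarrow> real \<Rightarrow> real \<Rightarrow> real" where
  "d_rho \<rho> t x y = \<bar>integral {min x y..max x y} (\<rho> t)\<bar>"

definition phi_top :: "(real \<Rightarrow> real) \<Rightarrow> real \<Rightarrow> (real \<Rightarrow> real \<Rightarrow> real) \<Rightarrow> real \<Rightarrow> real \<Rightarrow> real \<Rightarrow> real" where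
  "phi_top h \<alpha> \<rho> t x y = h \<bar>x - y\<bar> / (\<bar>x - y\<bar> powr \<alpha> * d_rho \<rho> t x y)"

(* integral over the torus, written as y = x + z with z in [-pi,pi], truncated at |z| >= eps *)
definition trunc_int :: "real \<Rightarrow> (real \<Rightarrow> real) \<Rightarrow> real" where
  "trunc_int \<epsilon> F = integral {z. \<epsilon> \<le> \<bar>z\<bar> \<and> \<bar>z\<bar> \<le> pi} F"

definition pv_torus :: "(real \<Rightarrow> real) \<Rightarrow> real" where
  "pv_torus F = Lim (at_right 0) (\<lambda>\<epsilon>. trunc_int \<epsilon> F)"

definition L_op :: "(real \<Rightarrow> real \<Rightarrow> real) \<Rightarrow> (real \<Rightarrow> real) \<Rightarrow> real \<Rightarrow> real" where
  "L_op \<phi> f x = pv_torus (\<lambda>z. \<phi> x (x + z) * (f (x + z) - f x))"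

end

theory Submission
  imports Defs
begin


lemma Ck2_cong:
  assumes "open S" "\<And>t x. (t,x)\<in>S \<Longrightarrow> f t x = g t x" "Ck2_on k S f"
  shows "Ck2_on k S g"
  using assms
proof (induction k arbitrary: f g)
  case 0
  then show ?case
    by (auto intro: continuous_on_cong[THEN iffD1] simp: split_beta)
next
  case (Suc k)
  from Suc.prems(3) obtain ft fx where
    d: "\<forall>(t, x)\<in>S. ((\<lambda>s. f s x) has_real_derivative ft t x) (at t)
                          \<and> ((\<lambda>y. f t y) has_real_derivative fx t x) (at x)"
    and c: "Ck2_on k S ft" "Ck2_on k S fx" by auto
  have "\<forall>(t, x)\<in>S. ((\<lambda>s. g s x) has_real_derivative ft t x) (at t)
                          \<and> ((\<lambda>y. g t y) has_real_derivative fx t x) (at x)"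
  proof (clarify)
    fix t x assume tx: "(t,x)\<in>S"
    have o1: "open {s. (s,x)\<in>S}"
      by (rule open_vimage[OF \<open>open S\<close>, of "\<lambda>s. (s,x)", unfolded vimage_def]) (auto intro!: continuous_intros)
    have o2: "open {y. (t,y)\<in>S}"
      by (rule open_vimage[OF \<open>open S\<close>, of "\<lambda>y. (t,y)", unfolded vimage_def]) (auto intro!: continuous_intros)
    show "((\<lambda>s. g s x) has_real_derivative ft t x) (at t)
          \<and> ((\<lambda>y. g t y) has_real_derivative fx t x) (at x)"
    proof
      show "((\<lambda>s. g s x) has_real_derivative ft t x) (at t)"
        by (rule has_field_derivative_transform_within_open[OF _ o1, of "\<lambda>s. f s x"])
           (use d tx Suc.prems(2) in auto)
      show "((\<lambda>y. g t y) has_real_derivative fx t x) (at x)"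
        by (rule has_field_derivative_transform_within_open[OF _ o2, of "\<lambda>y. f t y"])
           (use d tx Suc.prems(2) in auto)
    qed
  qed
  with c show ?case by auto
qed

lemma Ck2_Suc_D:
  assumes "open S" "Ck2_on (Suc k) S f"
  shows "Ck2_on k S (dt f)" "Ck2_on k S (dx f)"
    "\<And>t x. (t,x)\<in>S \<Longrightarrow> ((\<lambda>s. f s x) has_real_derivative dt f t x) (at t)"
    "\<And>t x. (t,x)\<in>S \<Longrightarrow> ((\<lambda>y. f t y) has_real_derivative dx f t x) (at x)"
proof -
  from assms(2) obtain ft fx where
    d: "\<forall>(t, x)\<in>S. ((\<lambda>s. f s x) has_real_derivative ft t x) (at t)
                          \<and> ((\<lambda>y. f t y) has_real_derivative fx t x) (at x)"
    and c: "Ck2_on k S ft" "Ck2_on k S fx" by auto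
  have e1: "dt f t x = ft t x" if "(t,x)\<in>S" for t x
    using d that unfolding dt_def by (auto intro: DERIV_imp_deriv)
  have e2: "dx f t x = fx t x" if "(t,x)\<in>S" for t x
    using d that unfolding dx_def by (auto intro: DERIV_imp_deriv)
  show "Ck2_on k S (dt f)" by (rule Ck2_cong[OF assms(1) _ c(1)]) (simp add: e1)
  show "Ck2_on k S (dx f)" by (rule Ck2_cong[OF assms(1) _ c(2)]) (simp add: e2)
  show "((\<lambda>s. f s x) has_real_derivative dt f t x) (at t)" if "(t,x)\<in>S" for t x
    using d that e1 by auto
  show "((\<lambda>y. f t y) has_real_derivative dx f t x) (at x)" if "(t,x)\<in>S" for t x
    using d that e2 by auto
qed

lemma smooth2_D:
  assumes "open S" "smooth2_on S f"
  shows "smooth2_on S (dt f)" "smooth2_on S (dx f)"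
    "\<And>t x. (t,x)\<in>S \<Longrightarrow> ((\<lambda>s. f s x) has_real_derivative dt f t x) (at t)"
    "\<And>t x. (t,x)\<in>S \<Longrightarrow> ((\<lambda>y. f t y) has_real_derivative dx f t x) (at x)"
    "continuous_on S (\<lambda>(t,x). f t x)"
  using Ck2_Suc_D[OF assms(1)] assms(2) unfolding smooth2_on_def
  by (metis Ck2_on.simps(1))+

lemma Ck2_add:
  assumes "open S" "Ck2_on k S f" "Ck2_on k S g"
  shows "Ck2_on k S (\<lambda>t x. f t x + g t x)"
  using assms(2,3)
proof (induction k arbitrary: f g)
  case 0
  then show ?case by (auto simp: split_beta intro!: continuous_intros)
next
  case (Suc k)
  from Suc.prems(1) obtain ft fx where
    d: "\<forall>(t, x)\<in>S. ((\<lambda>s. f s x) has_real_derivative ft t x) (at t)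
                          \<and> ((\<lambda>y. f t y) has_real_derivative fx t x) (at x)"
    and c: "Ck2_on k S ft" "Ck2_on k S fx" by auto
  from Suc.prems(2) obtain gt gx where
    d2: "\<forall>(t, x)\<in>S. ((\<lambda>s. g s x) has_real_derivative gt t x) (at t)
                          \<and> ((\<lambda>y. g t y) has_real_derivative gx t x) (at x)"
    and c2: "Ck2_on k S gt" "Ck2_on k S gx" by auto
  show ?case
    apply simp
    apply (rule exI[of _ "\<lambda>t x. ft t x + gt t x"], rule exI[of _ "\<lambda>t x. fx t x + gx t x"])
    using d d2 c c2 Suc.IH by (auto intro!: derivative_eq_intros)
qed

lemma smooth2_add:
  assumes "open S" "smooth2_on S f" "smooth2_on S g"
  shows "smooth2_on S (\<lambda>t x. f t x + g t x)"
  using assms Ck2_add unfolding smooth2_on_def by blast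

lemma smooth2_mult_aux:
  assumes "open S"
  shows "\<forall>f g. smooth2_on S f \<longrightarrow> smooth2_on S g \<longrightarrow> Ck2_on k S (\<lambda>t x. f t x * g t x)"
proof (induction k)
  case 0
  then show ?case
    by (auto dest!: smooth2_D(5)[OF assms] simp: split_beta intro!: continuous_intros)
next
  case (Suc k)
  show ?case
  proof (intro allI impI)
    fix f g assume f: "smooth2_on S f" and g: "smooth2_on S g"
    note fD = smooth2_D[OF assms f] and gD = smooth2_D[OF assms g]
    have "Ck2_on k S (\<lambda>t x. dt f t x * g t x + f t x * dt g t x)"
      by (rule Ck2_add[OF assms]) (use Suc fD gD f g in blast)+
    moreover have "Ck2_on k S (\<lambda>t x. dx f t x * g t x + f t x * dx g t x)"
      by (rule Ck2_add[OF assms]) (use Suc fD gD f g in blast)+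
    moreover have "\<forall>(t, x)\<in>S. ((\<lambda>s. f s x * g s x) has_real_derivative dt f t x * g t x + f t x * dt g t x) (at t)
                          \<and> ((\<lambda>y. f t y * g t y) has_real_derivative dx f t x * g t x + f t x * dx g t x) (at x)"
      using fD gD by (auto intro!: derivative_eq_intros)
    ultimately show "Ck2_on (Suc k) S (\<lambda>t x. f t x * g t x)"
      unfolding Ck2_on.simps
      by (intro exI[of _ "\<lambda>t x. dt f t x * g t x + f t x * dt g t x"]
            exI[of _ "\<lambda>t x. dx f t x * g t x + f t x * dx g t x"]) auto
  qed
qed

lemma smooth2_mult:
  assumes "open S" "smooth2_on S f" "smooth2_on S g"
  shows "smooth2_on S (\<lambda>t x. f t x * g t x)"
  using assms smooth2_mult_aux unfolding smooth2_on_def by blast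



lemma seg_ftc:
  fixes f f' :: "real \<Rightarrow> real"
  assumes d: "\<And>w. (f has_real_derivative f' w) (at w)"
  shows "f z - f 0 = z * integral {0..1} (\<lambda>s. f' (s*z))"
proof -
  have dd: "((\<lambda>s. f (s*z)) has_real_derivative (f' (s*z) * z)) (at s)" for s
    using DERIV_chain2[OF d, of "\<lambda>s. s*z" z s] DERIV_cmult_right[OF DERIV_ident, of z] by simp
  have "((\<lambda>s. f' (s*z) * z) has_integral (f (1*z) - f (0*z))) {0..1}"
  proof (rule fundamental_theorem_of_calculus)
    show "((\<lambda>s. f (s*z)) has_vector_derivative f' (x*z) * z) (at x within {0..1})" for x
      using has_field_derivative_at_within[OF dd[of x]]
      by (simp add: has_real_derivative_iff_has_vector_derivative)
  qed simp
  hence h: "((\<lambda>s. f' (s*z) * z) has_integral (f z - f 0)) {0..1}" by simp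
  show ?thesis
  proof (cases "z = 0")
    case True then show ?thesis by simp
  next
    case False
    have "(\<lambda>s. f' (s*z)) integrable_on {0..1}"
      using has_integral_integrable[OF h] False by simp
    then have "integral {0..1} (\<lambda>s. f' (s*z) * z) = integral {0..1} (\<lambda>s. f' (s*z)) * z"
      by simp
    then show ?thesis using integral_unique[OF h] by (simp add: mult.commute)
  qed
qed

lemma int_seg:
  fixes g :: "real \<Rightarrow> real"
  assumes "z \<noteq> 0" "continuous_on UNIV g"
  shows "integral {min x (x+z)..max x (x+z)} g = \<bar>z\<bar> * integral {0..1} (\<lambda>s. g (x + s*z))"
proof -
  have "(g has_integral integral {min x (x+z)..max x (x+z)} g) (cbox (min x (x+z)) (max x (x+z)))"
    by (auto intro!: integrable_integral integrable_continuous_interval continuous_on_subset[OF assms(2)])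
  from has_integral_affinity[OF this assms(1), of x]
  have h: "((\<lambda>s. g (z * s + x)) has_integral (1 / \<bar>z\<bar>) * integral {min x (x+z)..max x (x+z)} g)
       ((\<lambda>y. (1 / z) * y + - ((1 / z) * x)) ` {min x (x+z)..max x (x+z)})" by simp
  have img: "((\<lambda>y. (1 / z) * y + - ((1 / z) * x)) ` {min x (x+z)..max x (x+z)}) = {0..1}"
    unfolding image_affinity_atLeastAtMost using assms(1)
    by (cases "z > 0") (auto simp: field_simps min_def max_def)
  have "integral {0..1} (\<lambda>s. g (x + s*z)) = (1 / \<bar>z\<bar>) * integral {min x (x+z)..max x (x+z)} g"
    using h unfolding img by (simp add: integral_unique algebra_simps)
  then show ?thesis using assms(1) by simp
qed

lemma trunc_eq:
  fixes g :: "real \<Rightarrow> real"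
  assumes "continuous_on ({-pi..pi} - {0}) g" "0 < \<epsilon>" "\<epsilon> \<le> pi"
  shows "trunc_int \<epsilon> g = integral {\<epsilon>..pi} (\<lambda>z. g z + g (-z))"
proof -
  have set: "{z. \<epsilon> \<le> \<bar>z\<bar> \<and> \<bar>z\<bar> \<le> pi} = {-pi..-\<epsilon>} \<union> {\<epsilon>..pi}"
    using assms(2) by (auto simp: abs_if)
  have i1: "g integrable_on {-pi..-\<epsilon>}"
    by (rule integrable_continuous_interval, rule continuous_on_subset[OF assms(1)]) (use assms in auto)
  have i2: "g integrable_on {\<epsilon>..pi}"
    by (rule integrable_continuous_interval, rule continuous_on_subset[OF assms(1)]) (use assms in auto)
  have i3: "(\<lambda>z. g (-z)) integrable_on {\<epsilon>..pi}"
    by (rule integrable_continuous_interval, rule continuous_on_compose2[OF assms(1)]) (use assms in \<open>auto intro!: continuous_intros\<close>)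
  have "trunc_int \<epsilon> g = integral {-pi..-\<epsilon>} g + integral {\<epsilon>..pi} g"
    unfolding trunc_int_def set
    by (rule integral_Un[OF i1 i2]) (use assms in auto)
  also have "integral {-pi..-\<epsilon>} g = integral {\<epsilon>..pi} (\<lambda>z. g (-z))"
    using Henstock_Kurzweil_Integration.integral_reflect_real[of "-\<epsilon>" "-pi" g] by simp
  finally show ?thesis using integral_add[OF i2 i3] by simp
qed

lemma powr_int0:
  fixes \<beta> a C :: real
  assumes "\<beta> < 1" "0 \<le> a"
  shows "((\<lambda>z. C * z powr (-\<beta>)) has_integral C * (a powr (1-\<beta>) / (1-\<beta>))) {0..a}"
  using has_integral_mult_right[OF has_integral_powr_from_0[of "-\<beta>" a]] assms by simp

lemma integ_sing:
  fixes g :: "real \<Rightarrow> real"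
  assumes "\<beta> < 1" "continuous_on {0<..pi} g"
    and "\<And>z. 0 < z \<Longrightarrow> z \<le> pi \<Longrightarrow> \<bar>g z\<bar> \<le> C * z powr (-\<beta>)"
  shows "g integrable_on {0..pi}"
proof -
  have "(\<lambda>z. C * z powr (-\<beta>)) integrable_on {0..pi}"
    using powr_int0[OF assms(1)] by (meson has_integral_integrable pi_ge_zero)
  hence i: "(\<lambda>z. C * z powr (-\<beta>)) integrable_on {0<..pi}"
    by (rule integrable_spike_set) (auto intro: negligible_subset[of "{0}"])
  have "g integrable_on {0<..pi}"
    by (rule measurable_bounded_by_integrable_imp_integrable[OF _ i])
       (use assms in \<open>auto intro!: continuous_imp_measurable_on_sets_lebesgue\<close>)
  then show ?thesis
    by (rule integrable_spike_set) (auto intro: negligible_subset[of "{0}"])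
qed

lemma lim_sing:
  fixes g :: "real \<Rightarrow> real"
  assumes "\<beta> < 1" "g integrable_on {0..pi}" "g 0 = 0"
    and "\<And>z. 0 < z \<Longrightarrow> z \<le> pi \<Longrightarrow> \<bar>g z\<bar> \<le> C * z powr (-\<beta>)"
  shows "((\<lambda>\<epsilon>. integral {\<epsilon>..pi} g) \<longlongrightarrow> integral {0..pi} g) (at_right 0)"
proof -
  have C: "C \<ge> 0"
  proof -
    have "0 \<le> C * pi powr (-\<beta>)" using assms(4)[of pi] pi_gt_zero abs_ge_zero order_trans by fastforce
    moreover have "pi powr (-\<beta>) > 0" by simp
    ultimately show ?thesis by (simp add: zero_le_mult_iff)
  qed
  have bz: "\<bar>g z\<bar> \<le> C * z powr (-\<beta>)" if "0 \<le> z" "z \<le> pi" for z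
  proof (cases "z = 0")
    case True then show ?thesis using assms(3) by simp
  next
    case False then show ?thesis using assms(4)[of z] that by simp
  qed
  have b: "\<bar>integral {0..pi} g - integral {\<epsilon>..pi} g\<bar> \<le> C * (\<epsilon> powr (1-\<beta>) / (1-\<beta>))"
    if "0 < \<epsilon>" "\<epsilon> \<le> pi" for \<epsilon>
  proof -
    have "integral {0..pi} g = integral {0..\<epsilon>} g + integral {\<epsilon>..pi} g"
      using Henstock_Kurzweil_Integration.integral_combine[of 0 \<epsilon> pi g] that assms by simp
    moreover have "norm (integral {0..\<epsilon>} g) \<le> integral {0..\<epsilon>} (\<lambda>z. C * z powr (-\<beta>))"
    proof (rule integral_norm_bound_integral)
      show "g integrable_on {0..\<epsilon>}"
        by (rule integrable_subinterval_real[OF assms(2)]) (use that in simp)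
      show "(\<lambda>z. C * z powr (-\<beta>)) integrable_on {0..\<epsilon>}"
        by (rule has_integral_integrable[OF powr_int0[OF assms(1), where a=\<epsilon> and C=C]]) (use that in simp)
      show "norm (g x) \<le> C * x powr (-\<beta>)" if "x \<in> {0..\<epsilon>}" for x
        using bz[of x] that \<open>\<epsilon> \<le> pi\<close> by simp
    qed
    moreover have "integral {0..\<epsilon>} (\<lambda>z. C * z powr (-\<beta>)) = C * (\<epsilon> powr (1-\<beta>) / (1-\<beta>))"
      using integral_unique[OF powr_int0[OF assms(1), where a=\<epsilon> and C=C]] that by simp
    ultimately show ?thesis by simp
  qed
  have l: "((\<lambda>\<epsilon>. C * (\<epsilon> powr (1-\<beta>) / (1-\<beta>))) \<longlongrightarrow> 0) (at_right 0)"
  proof -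
    have l0: "((\<lambda>\<epsilon>::real. \<epsilon> powr (1-\<beta>)) \<longlongrightarrow> 0) (at_right 0)"
    proof (rule tendsto_zero_powrI[where b="1-\<beta>"])
      show "((\<lambda>x::real. x) \<longlongrightarrow> 0) (at_right 0)" by (rule tendsto_ident_at)
      show "((\<lambda>x::real. 1 - \<beta>) \<longlongrightarrow> 1 - \<beta>) (at_right 0)" by (rule tendsto_const)
      show "\<forall>\<^sub>F x in at_right 0. 0 \<le> (x::real)" by (rule eventually_at_rightI[of 0 1]) auto
      show "0 < 1 - \<beta>" using assms(1) by simp
    qed
    have "((\<lambda>\<epsilon>. C * (\<epsilon> powr (1-\<beta>) / (1-\<beta>))) \<longlongrightarrow> C * (0 / (1-\<beta>))) (at_right 0)"
      by (rule tendsto_mult[OF tendsto_const tendsto_divide[OF l0 tendsto_const]]) (use assms(1) in simp)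
    then show ?thesis by simp
  qed
  have "((\<lambda>\<epsilon>. integral {0..pi} g - integral {\<epsilon>..pi} g) \<longlongrightarrow> 0) (at_right 0)"
  proof (rule Lim_null_comparison[OF _ l])
    show "\<forall>\<^sub>F x in at_right 0. norm (integral {0..pi} g - integral {x..pi} g) \<le> C * (x powr (1 - \<beta>) / (1 - \<beta>))"
      using b by (auto intro!: eventually_at_rightI[of 0 pi])
  qed
  then have "((\<lambda>\<epsilon>. integral {0..pi} g - (integral {0..pi} g - integral {\<epsilon>..pi} g)) \<longlongrightarrow> integral {0..pi} g - 0) (at_right 0)"
    by (rule tendsto_diff[OF tendsto_const])
  then show ?thesis by simp
qed



lemma PV:
  fixes G G' :: "real \<Rightarrow> real \<Rightarrow> real" and c d p0 \<beta> C :: real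
  assumes cd: "c < p0" "p0 < d" and \<beta>: "\<beta> < 1"
  and der: "\<And>p z. p \<in> {c<..<d} \<Longrightarrow> z \<noteq> 0 \<Longrightarrow> ((\<lambda>q. G q z) has_real_derivative G' p z) (at p)"
  and G0: "\<And>p. G p 0 = 0" and G'0: "G' p0 0 = 0"
  and contG: "\<And>p. p \<in> {c<..<d} \<Longrightarrow> continuous_on ({-pi..pi} - {0}) (G p)"
  and contG': "continuous_on ({-pi..pi} - {0}) (G' p0)"
  and bnd: "\<And>p z. p \<in> {c<..<d} \<Longrightarrow> 0 < z \<Longrightarrow> z \<le> pi \<Longrightarrow> \<bar>G p z + G p (-z)\<bar> \<le> C * z powr (-\<beta>)"
  and bnd': "\<And>p z. p \<in> {c<..<d} \<Longrightarrow> 0 < z \<Longrightarrow> z \<le> pi \<Longrightarrow> \<bar>G' p z + G' p (-z)\<bar> \<le> C * z powr (-\<beta>)"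
  shows "\<And>p. p \<in> {c<..<d} \<Longrightarrow> ((\<lambda>\<epsilon>. trunc_int \<epsilon> (G p)) \<longlongrightarrow> integral {0..pi} (\<lambda>z. G p z + G p (-z))) (at_right 0)"
    "((\<lambda>\<epsilon>. trunc_int \<epsilon> (G' p0)) \<longlongrightarrow> integral {0..pi} (\<lambda>z. G' p0 z + G' p0 (-z))) (at_right 0)"
    "((\<lambda>p. pv_torus (G p)) has_real_derivative pv_torus (G' p0)) (at p0)"
proof -
  define I where "I = {c<..<d}"
  have p0I: "p0 \<in> I" using cd by (simp add: I_def)
  define S where "S = (\<lambda>p z. G p z + G p (-z))"
  define S' where "S' = (\<lambda>z. G' p0 z + G' p0 (-z))"
  have contS: "continuous_on {0<..pi} (\<lambda>z. g z + g (-z))" if "continuous_on ({-pi..pi} - {0}) g" for g :: "real \<Rightarrow> real"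
  proof (rule continuous_on_add)
    show "continuous_on {0<..pi} g" by (rule continuous_on_subset[OF that]) auto
    show "continuous_on {0<..pi} (\<lambda>z. g (- z))"
      by (rule continuous_on_compose2[OF that]) (auto intro!: continuous_intros)
  qed
  have lim: "((\<lambda>\<epsilon>. trunc_int \<epsilon> g) \<longlongrightarrow> integral {0..pi} (\<lambda>z. g z + g (-z))) (at_right 0)"
    if cg: "continuous_on ({-pi..pi} - {0}) g" and g0: "g 0 = 0"
      and bg: "\<And>z. 0 < z \<Longrightarrow> z \<le> pi \<Longrightarrow> \<bar>g z + g (-z)\<bar> \<le> C * z powr (-\<beta>)" for g :: "real \<Rightarrow> real"
  proof -
    have ig: "(\<lambda>z. g z + g (-z)) integrable_on {0..pi}"
      by (rule integ_sing[OF \<beta> contS[OF cg] bg])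
    have l: "((\<lambda>\<epsilon>. integral {\<epsilon>..pi} (\<lambda>z. g z + g (-z))) \<longlongrightarrow> integral {0..pi} (\<lambda>z. g z + g (-z))) (at_right 0)"
      by (rule lim_sing[OF \<beta> ig _ bg]) (simp add: g0)
    have ev: "\<forall>\<^sub>F \<epsilon> in at_right 0. integral {\<epsilon>..pi} (\<lambda>z. g z + g (-z)) = trunc_int \<epsilon> g"
      by (rule eventually_at_rightI[of 0 pi]) (use trunc_eq[OF cg] in auto)
    show ?thesis by (rule Lim_transform_eventually[OF l ev])
  qed
  show limG: "((\<lambda>\<epsilon>. trunc_int \<epsilon> (G p)) \<longlongrightarrow> integral {0..pi} (\<lambda>z. G p z + G p (-z))) (at_right 0)"
    if "p \<in> {c<..<d}" for p
    by (rule lim[OF contG[OF that] G0 bnd[OF that]])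
  show limG': "((\<lambda>\<epsilon>. trunc_int \<epsilon> (G' p0)) \<longlongrightarrow> integral {0..pi} (\<lambda>z. G' p0 z + G' p0 (-z))) (at_right 0)"
    by (rule lim[OF contG' G'0 bnd'[OF p0I[unfolded I_def]]])
  have pvG: "pv_torus (G p) = integral {0..pi} (S p)" if "p \<in> I" for p
    unfolding pv_torus_def S_def by (rule tendsto_Lim[OF _ limG]) (use that I_def in auto)
  have pvG': "pv_torus (G' p0) = integral {0..pi} S'"
    unfolding pv_torus_def S'_def by (rule tendsto_Lim[OF _ limG']) auto
  have intS: "S p integrable_on {0..pi}" if "p \<in> I" for p
    unfolding S_def by (rule integ_sing[OF \<beta> contS[OF contG] bnd]) (use that I_def in auto)
  have S0: "S p 0 = 0" for p by (simp add: S_def G0)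
  have derS: "((\<lambda>q. S q z) has_real_derivative (G' p z + G' p (-z))) (at p)" if "p \<in> I" "z \<noteq> 0" for p z
    unfolding S_def using that I_def by (auto intro!: derivative_eq_intros der)
  have mvt: "\<bar>S p z - S p0 z\<bar> \<le> C * z powr (-\<beta>) * \<bar>p - p0\<bar>" if "p \<in> I" "0 < z" "z \<le> pi" for p z
  proof (cases "p = p0")
    case True then show ?thesis by simp
  next
    case False
    define a where "a = min p p0"
    define b where "b = max p p0"
    have ab: "a < b" using False by (auto simp: a_def b_def)
    have sub: "q \<in> I" if "a \<le> q" "q \<le> b" for q
      using that \<open>p \<in> I\<close> p0I by (auto simp: I_def a_def b_def)
    obtain \<xi> where \<xi>: "a < \<xi>" "\<xi> < b" "S b z - S a z = (b - a) * (G' \<xi> z + G' \<xi> (-z))"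
      using MVT2[OF ab, of "\<lambda>q. S q z" "\<lambda>q. G' q z + G' q (-z)"] derS sub \<open>0 < z\<close> by auto
    have "\<bar>S p z - S p0 z\<bar> = \<bar>S b z - S a z\<bar>" by (auto simp: a_def b_def)
    also have "\<dots> = (b - a) * \<bar>G' \<xi> z + G' \<xi> (-z)\<bar>" using \<xi> ab by (simp add: abs_mult)
    also have "\<dots> \<le> (b - a) * (C * z powr (-\<beta>))"
      using bnd'[of \<xi> z] sub[of \<xi>] \<xi> that ab I_def by (intro mult_left_mono) auto
    also have "b - a = \<bar>p - p0\<bar>" by (auto simp: a_def b_def)
    finally show ?thesis by (simp add: mult_ac)
  qed
  define V where "V = (\<lambda>p. integral {0..pi} (S p))"
  have "(V has_real_derivative integral {0..pi} S') (at p0 within I)"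
    unfolding has_field_derivative_iff tendsto_at_iff_sequentially
  proof (intro allI impI)
    fix X :: "nat \<Rightarrow> real" assume X: "\<forall>i. X i \<in> I - {p0}" "X \<longlonglongrightarrow> p0"
    define Q where "Q = (\<lambda>k z. (S (X k) z - S p0 z) / (X k - p0))"
    have hint: "(\<lambda>z. C * z powr (-\<beta>)) integrable_on {0..pi}"
      using powr_int0[OF \<beta>] by (meson has_integral_integrable pi_ge_zero)
    have iQ: "Q k integrable_on {0..pi}" for k
      unfolding Q_def divide_inverse
      by (intro integrable_on_mult_left integrable_diff intS p0I) (use X in auto)
    have bQ: "norm (Q k z) \<le> C * z powr (-\<beta>)" if "z \<in> {0..pi}" for k z
    proof (cases "z = 0")
      case True then show ?thesis by (simp add: Q_def S0)
    next
      case False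
      have "X k \<noteq> p0" "X k \<in> I" using X by auto
      then show ?thesis using mvt[of "X k" z] that False
        by (auto simp: Q_def abs_divide divide_le_eq)
    qed
    have cQ: "(\<lambda>k. Q k z) \<longlonglongrightarrow> S' z" if "z \<in> {0..pi}" for z
    proof (cases "z = 0")
      case True then show ?thesis by (simp add: Q_def S'_def S0 G'0)
    next
      case False
      have "((\<lambda>y. (S y z - S p0 z) / (y - p0)) \<longlongrightarrow> S' z) (at p0 within I)"
        using derS[OF p0I False] unfolding S'_def has_field_derivative_iff
        by (rule tendsto_within_subset) simp
      then show ?thesis
        unfolding tendsto_at_iff_sequentially using X by (auto simp: Q_def o_def)
    qed
    have "(\<lambda>k. integral {0..pi} (Q k)) \<longlonglongrightarrow> integral {0..pi} S'"
      by (rule dominated_convergence(2)[OF iQ hint bQ cQ])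
    moreover have "integral {0..pi} (Q k) = (V (X k) - V p0) / (X k - p0)" for k
    proof -
      have "integral {0..pi} (Q k) = integral {0..pi} (\<lambda>z. S (X k) z - S p0 z) / (X k - p0)"
        unfolding Q_def by simp
      also have "\<dots> = (V (X k) - V p0) / (X k - p0)"
        unfolding V_def by (subst integral_diff) (use intS p0I X in auto)
      finally show ?thesis .
    qed
    ultimately show "((\<lambda>y. (V y - V p0) / (y - p0)) \<circ> X) \<longlonglongrightarrow> integral {0..pi} S'"
      by (simp add: o_def)
  qed
  hence "(V has_real_derivative integral {0..pi} S') (at p0)"
    using at_within_open[OF p0I] by (simp add: I_def)
  then show "((\<lambda>p. pv_torus (G p)) has_real_derivative pv_torus (G' p0)) (at p0)"
    unfolding pvG'
    by (rule has_field_derivative_transform_within_open[of _ _ _ I])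
       (use p0I pvG in \<open>auto simp: I_def V_def\<close>)
qed



definition PI :: "(real \<Rightarrow> real \<Rightarrow> real) \<Rightarrow> (real \<Rightarrow> real) \<Rightarrow> real \<Rightarrow> real \<Rightarrow> real" where
  "PI X wt p z = integral {0..1} (\<lambda>s. wt s * X p (s*z))"

lemma cont_comp_pw:
  fixes X :: "real \<Rightarrow> real \<Rightarrow> real" and wt :: "real \<Rightarrow> real"
  assumes "continuous_on (U \<times> UNIV) (\<lambda>(p,w). X p w)" "continuous_on UNIV wt"
  shows "continuous_on ((U \<times> UNIV) \<times> cbox 0 1) (\<lambda>(pz, s). wt s * X (fst pz) (s * snd pz))"
proof -
  have "continuous_on ((U \<times> UNIV) \<times> cbox 0 1) (\<lambda>q. (\<lambda>(p,w). X p w) ((\<lambda>(pz, s::real). (fst pz, s * snd pz)) q))"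
    by (rule continuous_on_compose2[OF assms(1)]) (auto intro!: continuous_intros simp: split_beta)
  then show ?thesis
    by (auto intro!: continuous_intros continuous_on_compose2[OF assms(2)] simp: split_beta)
qed

lemma PI_cont:
  fixes X :: "real \<Rightarrow> real \<Rightarrow> real" and wt :: "real \<Rightarrow> real"
  assumes "continuous_on (U \<times> UNIV) (\<lambda>(p,w). X p w)" "continuous_on UNIV wt"
  shows "continuous_on (U \<times> UNIV) (\<lambda>(p,z). PI X wt p z)"
proof -
  have "continuous_on (U \<times> UNIV) (\<lambda>pz. integral (cbox 0 1) (\<lambda>s. wt s * X (fst pz) (s * snd pz)))"
    by (rule integral_continuous_on_param) (use cont_comp_pw[OF assms] in \<open>simp add: split_beta\<close>)
  then show ?thesis by (simp add: PI_def split_beta)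
qed

lemma PI_dz:
  assumes "p \<in> U" "continuous_on (U \<times> UNIV) (\<lambda>(p,w). Xw p w)" "continuous_on UNIV wt"
    and d: "\<And>w. (X p has_real_derivative Xw p w) (at w)"
  shows "((\<lambda>y. PI X wt p y) has_real_derivative PI Xw (\<lambda>s. wt s * s) p z) (at z)"
proof -
  have cX: "continuous_on UNIV (X p)"
    using d by (meson DERIV_isCont continuous_at_imp_continuous_on)
  have cXw: "continuous_on UNIV (Xw p)"
    by (rule continuous_on_compose2[OF assms(2), of UNIV "\<lambda>w. (p, w)", simplified])
       (use assms(1) in \<open>auto intro!: continuous_intros\<close>)
  have "((\<lambda>y. integral (cbox 0 1) (\<lambda>s. wt s * X p (s*y))) has_field_derivative
         integral (cbox 0 1) (\<lambda>s. wt s * (Xw p (s*z) * s))) (at z within UNIV)"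
  proof (rule leibniz_rule_field_derivative)
    show "((\<lambda>y. wt s * X p (s*y)) has_field_derivative wt s * (Xw p (s*x) * s)) (at x within UNIV)" for x s
      by (rule DERIV_cmult, rule DERIV_chain2[OF d]) (auto intro!: derivative_eq_intros)
    show "(\<lambda>s. wt s * X p (s*x)) integrable_on cbox 0 1" for x
      by (rule integrable_continuous)
         (auto intro!: continuous_intros continuous_on_compose2[OF cX] continuous_on_subset[OF assms(3)])
    show "continuous_on (UNIV \<times> cbox 0 1) (\<lambda>(x, s). wt s * (Xw p (s*x) * s))"
      by (auto simp: split_beta intro!: continuous_intros continuous_on_compose2[OF cXw] continuous_on_compose2[OF assms(3)])
  qed auto
  then show ?thesis by (simp add: PI_def mult_ac)
qed

lemma PI_dp:
  assumes U: "open U" "convex U" "p \<in> U" "continuous_on (U \<times> UNIV) (\<lambda>(p,w). Xp p w)"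
    "continuous_on (U \<times> UNIV) (\<lambda>(p,w). X p w)" "continuous_on UNIV wt"
    and d: "\<And>q w. q \<in> U \<Longrightarrow> ((\<lambda>r. X r w) has_real_derivative Xp q w) (at q)"
  shows "((\<lambda>q. PI X wt q z) has_real_derivative PI Xp wt p z) (at p)"
proof -
  have "((\<lambda>q. integral (cbox 0 1) (\<lambda>s. wt s * X q (s*z))) has_field_derivative
         integral (cbox 0 1) (\<lambda>s. wt s * Xp p (s*z))) (at p within U)"
  proof (rule leibniz_rule_field_derivative)
    show "((\<lambda>q. wt s * X q (s*z)) has_field_derivative wt s * Xp x (s*z)) (at x within U)" if "x \<in> U" for x s
      by (rule DERIV_cmult, rule has_field_derivative_at_within, rule d[OF that])
    show "(\<lambda>s. wt s * X x (s*z)) integrable_on cbox 0 1" if "x \<in> U" for x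
    proof -
      have cX: "continuous_on UNIV (X x)"
        by (rule continuous_on_compose2[OF U(5), of UNIV "\<lambda>w. (x, w)", simplified])
           (use that in \<open>auto intro!: continuous_intros\<close>)
      show ?thesis
        by (rule integrable_continuous)
           (auto intro!: continuous_intros continuous_on_compose2[OF cX] continuous_on_subset[OF U(6)])
    qed
    show "continuous_on (U \<times> cbox 0 1) (\<lambda>(x, s). wt s * Xp x (s*z))"
    proof -
      have "continuous_on (U \<times> cbox 0 1) (\<lambda>q. (\<lambda>(p,w). Xp p w) ((\<lambda>(x, s::real). (x, s * z)) q))"
        by (rule continuous_on_compose2[OF U(4)]) (auto intro!: continuous_intros simp: split_beta)
      then show ?thesis
        by (auto intro!: continuous_intros continuous_on_compose2[OF U(6)] simp: split_beta)
    qed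
  qed (use U in auto)
  then show ?thesis using at_within_open[OF U(3,1)] by (simp add: PI_def)
qed

lemma PI_pos:
  assumes "continuous_on UNIV (X p)" "\<And>w. X p w > 0"
  shows "PI X (\<lambda>s. 1) p z > 0"
proof -
  have c: "continuous_on {0..1} (\<lambda>s. X p (s*z))"
    by (auto intro!: continuous_intros continuous_on_compose2[OF assms(1)])
  obtain s0 where s0: "s0 \<in> {0..1}" "\<And>s. s \<in> {0..1} \<Longrightarrow> X p (s0*z) \<le> X p (s*z)"
    using continuous_attains_inf[OF compact_Icc _ c] by fastforce
  have "integral {0..1} (\<lambda>s::real. X p (s0*z)) \<le> integral {0..1} (\<lambda>s. X p (s*z))"
    by (rule Henstock_Kurzweil_Integration.integral_le[of "\<lambda>s. X p (s0*z)" "{0..1}" "\<lambda>s. X p (s*z)"])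
       (use s0 c in \<open>auto intro: integrable_continuous_interval\<close>)
  moreover have "integral {0..1} (\<lambda>s::real. X p (s0*z)) = X p (s0*z)" by simp
  ultimately show ?thesis using assms(2)[of "s0*z"] by (simp add: PI_def)
qed



lemma cont_bound:
  fixes f :: "real \<times> real \<Rightarrow> real"
  assumes "continuous_on K f" "compact K"
  shows "\<exists>M. \<forall>x\<in>K. \<bar>f x\<bar> \<le> M"
proof -
  have "bounded (f ` K)" by (rule compact_imp_bounded[OF compact_continuous_image[OF assms]])
  then show ?thesis unfolding bounded_real by auto
qed

lemma sym_mvt:
  fixes f f' :: "real \<Rightarrow> real"
  assumes "0 < z" "z \<le> pi" "\<And>y. (f has_real_derivative f' y) (at y)" "\<And>y. -pi \<le> y \<Longrightarrow> y \<le> pi \<Longrightarrow> \<bar>f' y\<bar> \<le> M"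
  shows "\<bar>f z - f (-z)\<bar> \<le> 2 * z * M"
proof -
  obtain \<xi> where \<xi>: "-z < \<xi>" "\<xi> < z" "f z - f (-z) = (z - (-z)) * f' \<xi>"
    using MVT2[of "-z" z f f'] assms by auto
  have "\<bar>f' \<xi>\<bar> \<le> M" using assms \<xi> by auto
  then show ?thesis using \<xi> assms by (simp add: abs_mult)
qed

lemma kz_bound:
  fixes h :: "real \<Rightarrow> real"
  assumes "\<And>r. \<bar>h r\<bar> \<le> 1" "0 < z" "\<bar>D\<bar> \<le> 2 * z * M"
  shows "\<bar>h \<bar>z\<bar> * z / (\<bar>z\<bar> powr \<alpha> * \<bar>z\<bar>) * D\<bar> \<le> 2 * M * z powr (- (\<alpha> - 1))"
proof -
  have zp: "z powr \<alpha> > 0" using assms by simp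
  have "\<bar>h \<bar>z\<bar> * z / (\<bar>z\<bar> powr \<alpha> * \<bar>z\<bar>) * D\<bar> = \<bar>h z\<bar> * \<bar>D\<bar> / z powr \<alpha>"
    using assms(2) zp by (simp add: abs_mult field_simps)
  also have "\<dots> \<le> 1 * (2 * z * M) / z powr \<alpha>"
    by (rule divide_right_mono, rule mult_mono) (use assms zp in auto)
  also have "\<dots> = 2 * M * (z / z powr \<alpha>)" by simp
  also have "z / z powr \<alpha> = z powr (- (\<alpha> - 1))"
    using assms(2) by (simp add: powr_diff powr_minus field_simps)
  finally show ?thesis .
qed

lemma GL:
  fixes F Fw Fww Fwp Fwpw P Pw Pp Ppw G G' :: "real \<Rightarrow> real \<Rightarrow> real" and h :: "real \<Rightarrow> real"
    and a b p0 \<alpha> :: real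
  assumes ab: "a < p0" "p0 < b"
  and hc: "continuous_on UNIV h" and hb: "\<And>r. \<bar>h r\<bar> \<le> 1"
  and \<alpha>: "0 < \<alpha>" "\<alpha> < 2"
  and dF: "\<And>p w. p \<in> {a<..<b} \<Longrightarrow> (F p has_real_derivative Fw p w) (at w)"
  and dFw: "\<And>p w. p \<in> {a<..<b} \<Longrightarrow> (Fw p has_real_derivative Fww p w) (at w)"
  and dFwp: "\<And>p w. p \<in> {a<..<b} \<Longrightarrow> ((\<lambda>q. Fw q w) has_real_derivative Fwp p w) (at p)"
  and dFwpw: "\<And>p w. p \<in> {a<..<b} \<Longrightarrow> (Fwp p has_real_derivative Fwpw p w) (at w)"
  and dP: "\<And>p w. p \<in> {a<..<b} \<Longrightarrow> (P p has_real_derivative Pw p w) (at w)"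
  and dPp: "\<And>p w. p \<in> {a<..<b} \<Longrightarrow> ((\<lambda>q. P q w) has_real_derivative Pp p w) (at p)"
  and dPpw: "\<And>p w. p \<in> {a<..<b} \<Longrightarrow> (Pp p has_real_derivative Ppw p w) (at w)"
  and cFw: "continuous_on ({a<..<b} \<times> UNIV) (\<lambda>(p,w). Fw p w)"
  and cFww: "continuous_on ({a<..<b} \<times> UNIV) (\<lambda>(p,w). Fww p w)"
  and cFwp: "continuous_on ({a<..<b} \<times> UNIV) (\<lambda>(p,w). Fwp p w)"
  and cFwpw: "continuous_on ({a<..<b} \<times> UNIV) (\<lambda>(p,w). Fwpw p w)"
  and cP: "continuous_on ({a<..<b} \<times> UNIV) (\<lambda>(p,w). P p w)"
  and cPw: "continuous_on ({a<..<b} \<times> UNIV) (\<lambda>(p,w). Pw p w)"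
  and cPp: "continuous_on ({a<..<b} \<times> UNIV) (\<lambda>(p,w). Pp p w)"
  and cPpw: "continuous_on ({a<..<b} \<times> UNIV) (\<lambda>(p,w). Ppw p w)"
  and Ppos: "\<And>p w. p \<in> {a<..<b} \<Longrightarrow> P p w > 0"
  and G_def: "\<And>p z. G p z = h \<bar>z\<bar> / (\<bar>z\<bar> powr \<alpha> * (\<bar>z\<bar> * integral {0..1} (\<lambda>s. P p (s*z)))) * (F p z - F p 0)"
  and dG: "\<And>p z. p \<in> {a<..<b} \<Longrightarrow> z \<noteq> 0 \<Longrightarrow> ((\<lambda>q. G q z) has_real_derivative G' p z) (at p)"
  and G'0: "G' p0 0 = 0"
  shows "\<And>p. p \<in> {a<..<b} \<Longrightarrow> \<exists>L. ((\<lambda>\<epsilon>. trunc_int \<epsilon> (G p)) \<longlongrightarrow> L) (at_right 0)"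
    "\<exists>L. ((\<lambda>\<epsilon>. trunc_int \<epsilon> (G' p0)) \<longlongrightarrow> L) (at_right 0)"
    "((\<lambda>p. pv_torus (G p)) has_real_derivative pv_torus (G' p0)) (at p0)"
    "\<And>p. p \<in> {a<..<b} \<Longrightarrow> continuous_on ({-pi..pi} - {0}) (G p)"
proof -
  define I where "I = {a<..<b}"
  have oI: "open I" "convex I" by (auto simp: I_def)
  define w1 where "w1 = (\<lambda>s::real. 1::real)"
  define ws where "ws = (\<lambda>s::real. w1 s * s)"
  have cw1: "continuous_on UNIV w1" by (simp add: w1_def)
  define A where "A = PI Fw w1"
  define Az where "Az = PI Fww ws"
  define Ap where "Ap = PI Fwp w1"
  define Apz where "Apz = PI Fwpw ws"
  define B where "B = PI P w1"
  define Bz where "Bz = PI Pw ws"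
  define Bp where "Bp = PI Pp w1"
  define Bpz where "Bpz = PI Ppw ws"
  note dFI = dF[folded I_def] and dFwI = dFw[folded I_def] and dFwpI = dFwp[folded I_def]
    and dFwpwI = dFwpw[folded I_def] and dPI = dP[folded I_def] and dPpI = dPp[folded I_def]
    and dPpwI = dPpw[folded I_def]
  note cs = cFw[folded I_def] cFww[folded I_def] cFwp[folded I_def] cFwpw[folded I_def]
    cP[folded I_def] cPw[folded I_def] cPp[folded I_def] cPpw[folded I_def]
  have dAz: "((\<lambda>y. A p y) has_real_derivative Az p z) (at z)" if "p \<in> I" for p z
    unfolding A_def Az_def ws_def by (rule PI_dz[where X=Fw and Xw=Fww and wt=w1, OF that cs(2) cw1 dFwI[OF that]])
  have dApz: "((\<lambda>y. Ap p y) has_real_derivative Apz p z) (at z)" if "p \<in> I" for p z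
    unfolding Ap_def Apz_def ws_def by (rule PI_dz[where X=Fwp and Xw=Fwpw and wt=w1, OF that cs(4) cw1 dFwpwI[OF that]])
  have dBz: "((\<lambda>y. B p y) has_real_derivative Bz p z) (at z)" if "p \<in> I" for p z
    unfolding B_def Bz_def ws_def by (rule PI_dz[where X=P and Xw=Pw and wt=w1, OF that cs(6) cw1 dPI[OF that]])
  have dBpz: "((\<lambda>y. Bp p y) has_real_derivative Bpz p z) (at z)" if "p \<in> I" for p z
    unfolding Bp_def Bpz_def ws_def by (rule PI_dz[where X=Pp and Xw=Ppw and wt=w1, OF that cs(8) cw1 dPpwI[OF that]])
  have dAp: "((\<lambda>q. A q z) has_real_derivative Ap p z) (at p)" if "p \<in> I" for p z
    unfolding A_def Ap_def by (rule PI_dp[where X=Fw and Xp=Fwp and wt=w1, OF oI that cs(3) cs(1) cw1 dFwpI])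
  have dBp: "((\<lambda>q. B q z) has_real_derivative Bp p z) (at p)" if "p \<in> I" for p z
    unfolding B_def Bp_def by (rule PI_dp[where X=P and Xp=Pp and wt=w1, OF oI that cs(7) cs(5) cw1 dPpI])
  have Bpos: "B p z > 0" if "p \<in> I" for p z
  proof -
    have "continuous_on UNIV (P p)"
      by (rule continuous_on_compose2[OF cs(5), of UNIV "\<lambda>w. (p, w)", simplified])
         (use that in \<open>auto intro!: continuous_intros\<close>)
    then show ?thesis unfolding B_def w1_def using PI_pos Ppos that I_def by blast
  qed
  have cws: "continuous_on UNIV ws" by (auto simp: ws_def w1_def intro!: continuous_intros)
  have cA: "continuous_on (I \<times> UNIV) (\<lambda>x. A (fst x) (snd x))"
    using PI_cont[OF cs(1) cw1] by (simp add: A_def split_beta)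
  have cAz: "continuous_on (I \<times> UNIV) (\<lambda>x. Az (fst x) (snd x))"
    using PI_cont[OF cs(2) cws] by (simp add: Az_def split_beta)
  have cAp: "continuous_on (I \<times> UNIV) (\<lambda>x. Ap (fst x) (snd x))"
    using PI_cont[OF cs(3) cw1] by (simp add: Ap_def split_beta)
  have cApz: "continuous_on (I \<times> UNIV) (\<lambda>x. Apz (fst x) (snd x))"
    using PI_cont[OF cs(4) cws] by (simp add: Apz_def split_beta)
  have cB: "continuous_on (I \<times> UNIV) (\<lambda>x. B (fst x) (snd x))"
    using PI_cont[OF cs(5) cw1] by (simp add: B_def split_beta)
  have cBz: "continuous_on (I \<times> UNIV) (\<lambda>x. Bz (fst x) (snd x))"
    using PI_cont[OF cs(6) cws] by (simp add: Bz_def split_beta)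
  have cBp: "continuous_on (I \<times> UNIV) (\<lambda>x. Bp (fst x) (snd x))"
    using PI_cont[OF cs(7) cw1] by (simp add: Bp_def split_beta)
  have cBpz: "continuous_on (I \<times> UNIV) (\<lambda>x. Bpz (fst x) (snd x))"
    using PI_cont[OF cs(8) cws] by (simp add: Bpz_def split_beta)
  define R where "R = (\<lambda>p z. A p z / B p z)"
  define Rz where "Rz = (\<lambda>p z. (Az p z * B p z - A p z * Bz p z) / (B p z * B p z))"
  define Rp where "Rp = (\<lambda>p z. (Ap p z * B p z - A p z * Bp p z) / (B p z * B p z))"
  define Rpz where "Rpz = (\<lambda>p z. (((Apz p z * B p z + Bz p z * Ap p z) - (Az p z * Bp p z + Bpz p z * A p z)) * (B p z * B p z)
       - (Ap p z * B p z - A p z * Bp p z) * (Bz p z * B p z + Bz p z * B p z)) / ((B p z * B p z) * (B p z * B p z)))"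
  have dRz: "((\<lambda>y. R p y) has_real_derivative Rz p z) (at z)" if "p \<in> I" for p z
    unfolding R_def Rz_def
    by (rule DERIV_divide[OF dAz[OF that] dBz[OF that]]) (use Bpos[OF that, of z] in auto)
  have dRp: "((\<lambda>q. R q z) has_real_derivative Rp p z) (at p)" if "p \<in> I" for p z
    unfolding R_def Rp_def
    by (rule DERIV_divide[OF dAp[OF that] dBp[OF that]]) (use Bpos[OF that, of z] in auto)
  have dRpz: "((\<lambda>y. Rp p y) has_real_derivative Rpz p z) (at z)" if "p \<in> I" for p z
    unfolding Rp_def Rpz_def
    by (rule DERIV_divide[OF DERIV_diff[OF DERIV_mult[OF dApz[OF that] dBz[OF that]] DERIV_mult[OF dAz[OF that] dBpz[OF that]]]
            DERIV_mult[OF dBz[OF that] dBz[OF that]]]) (use Bpos[OF that, of z] in auto)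
  have Bne: "B (fst x) (snd x) \<noteq> 0" if "x \<in> I \<times> UNIV" for x
    using Bpos[of "fst x" "snd x"] that by (auto simp: mem_Times_iff)
  have cRz: "continuous_on (I \<times> UNIV) (\<lambda>x. Rz (fst x) (snd x))"
    unfolding Rz_def using Bne by (intro continuous_intros cA cAz cB cBz) auto
  have cRpz: "continuous_on (I \<times> UNIV) (\<lambda>x. Rpz (fst x) (snd x))"
    unfolding Rpz_def using Bne by (intro continuous_intros cA cAz cB cBz cAp cApz cBp cBpz) auto
  define kz where "kz = (\<lambda>z. h \<bar>z\<bar> * z / (\<bar>z\<bar> powr \<alpha> * \<bar>z\<bar>))"
  have kzm: "kz (-z) = - kz z" for z by (simp add: kz_def)
  have Geq: "G p z = kz z * R p z" if "p \<in> I" "z \<noteq> 0" for p z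
  proof -
    have "F p z - F p 0 = z * A p z"
      using seg_ftc[of "F p" "Fw p" z] dFI[OF that(1)] by (simp add: A_def PI_def w1_def)
    moreover have "integral {0..1} (\<lambda>s. P p (s*z)) = B p z" by (simp add: B_def PI_def w1_def)
    ultimately show ?thesis
      unfolding G_def kz_def R_def using Bpos[OF that(1), of z] that(2) by (simp add: field_simps)
  qed
  define G'' where "G'' = (\<lambda>q z. if z = 0 then 0 else G' q z)"
  have G'eq: "G'' p z = kz z * Rp p z" if "p \<in> I" "z \<noteq> 0" for p z
  proof -
    have "((\<lambda>q. kz z * R q z) has_real_derivative kz z * Rp p z) (at p)"
      by (rule DERIV_cmult[OF dRp[OF that(1)]])
    then have "((\<lambda>q. G q z) has_real_derivative kz z * Rp p z) (at p)"
      by (rule has_field_derivative_transform_within_open[OF _ oI(1) that(1)]) (use Geq that in auto)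
    then show ?thesis using dG[OF that(1)[unfolded I_def] that(2)] DERIV_unique that(2)
      unfolding G''_def by auto
  qed
  have G0: "G p 0 = 0" for p by (simp add: G_def)
  have G''0: "G'' p 0 = 0" for p by (simp add: G''_def)
  have ckz: "continuous_on ({-pi..pi} - {0}) kz"
    unfolding kz_def by (intro continuous_intros continuous_on_compose2[OF hc]) auto
  have \<beta>: "\<alpha> - 1 < 1" using \<alpha> by simp
  have main: "((\<lambda>\<epsilon>. trunc_int \<epsilon> (G q0)) \<longlongrightarrow> integral {0..pi} (\<lambda>z. G q0 z + G q0 (-z))) (at_right 0)
     \<and> ((\<lambda>\<epsilon>. trunc_int \<epsilon> (G'' q0)) \<longlongrightarrow> integral {0..pi} (\<lambda>z. G'' q0 z + G'' q0 (-z))) (at_right 0)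
     \<and> ((\<lambda>p. pv_torus (G p)) has_real_derivative pv_torus (G'' q0)) (at q0)
     \<and> continuous_on ({-pi..pi} - {0}) (G q0)"
    if cd: "a < c" "c < q0" "q0 < d" "d < b" for c d q0
  proof -
    have cdI: "{c..d} \<subseteq> I" using cd by (auto simp: I_def)
    define K where "K = {c..d} \<times> {-pi..pi}"
    have cK: "compact K" unfolding K_def by (intro compact_Times compact_Icc)
    have KI: "K \<subseteq> I \<times> UNIV" using cdI by (auto simp: K_def)
    obtain M1 where M1: "\<And>x. x \<in> K \<Longrightarrow> \<bar>Rz (fst x) (snd x)\<bar> \<le> M1"
      using cont_bound[OF continuous_on_subset[OF cRz KI] cK] by blast
    obtain M2 where M2: "\<And>x. x \<in> K \<Longrightarrow> \<bar>Rpz (fst x) (snd x)\<bar> \<le> M2"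
      using cont_bound[OF continuous_on_subset[OF cRpz KI] cK] by blast
    define M where "M = max M1 M2"
    have inI: "p \<in> I" if "p \<in> {c<..<d}" for p
    proof -
      have "p \<in> {c..d}" using that by auto
      then show ?thesis using cdI by blast
    qed
    have contG: "continuous_on ({-pi..pi} - {0}) (G p)" if "p \<in> {c<..<d}" for p
    proof -
      have pI: "p \<in> I" using inI that by auto
      have "continuous_on ({-pi..pi} - {0}) (\<lambda>z. kz z * R p z)"
        by (intro continuous_on_mult ckz continuous_at_imp_continuous_on ballI DERIV_isCont[OF dRz[OF pI]])
      then show ?thesis by (rule continuous_on_cong[THEN iffD1, rotated 2]) (use Geq pI in auto)
    qed
    have contG': "continuous_on ({-pi..pi} - {0}) (G'' q0)"
    proof -
      have pI: "q0 \<in> I" using cd inI by auto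
      have "continuous_on ({-pi..pi} - {0}) (\<lambda>z. kz z * Rp q0 z)"
        by (intro continuous_on_mult ckz continuous_at_imp_continuous_on ballI DERIV_isCont[OF dRpz[OF pI]])
      then show ?thesis by (rule continuous_on_cong[THEN iffD1, rotated 2]) (use G'eq pI in auto)
    qed
    have bnd: "\<bar>G p z + G p (-z)\<bar> \<le> (2 * M) * z powr (- (\<alpha> - 1))" if "p \<in> {c<..<d}" "0 < z" "z \<le> pi" for p z
    proof -
      have pI: "p \<in> I" using that inI by auto
      have "\<bar>R p z - R p (-z)\<bar> \<le> 2 * z * M"
        by (rule sym_mvt[OF that(2,3) dRz[OF pI]])
           (use M1 that in \<open>force simp: K_def M_def intro: order_trans[OF _ max.cobounded1]\<close>)
      then have "\<bar>kz z * (R p z - R p (-z))\<bar> \<le> 2 * M * z powr (- (\<alpha> - 1))"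
        unfolding kz_def by (rule kz_bound[OF hb that(2)])
      moreover have "G p z + G p (-z) = kz z * (R p z - R p (-z))"
        using Geq[OF pI, of z] Geq[OF pI, of "-z"] that kzm[of z] by (simp add: algebra_simps)
      ultimately show ?thesis by simp
    qed
    have bnd': "\<bar>G'' p z + G'' p (-z)\<bar> \<le> (2 * M) * z powr (- (\<alpha> - 1))" if "p \<in> {c<..<d}" "0 < z" "z \<le> pi" for p z
    proof -
      have pI: "p \<in> I" using that inI by auto
      have "\<bar>Rp p z - Rp p (-z)\<bar> \<le> 2 * z * M"
        by (rule sym_mvt[OF that(2,3) dRpz[OF pI]])
           (use M2 that in \<open>force simp: K_def M_def intro: order_trans[OF _ max.cobounded2]\<close>)
      then have "\<bar>kz z * (Rp p z - Rp p (-z))\<bar> \<le> 2 * M * z powr (- (\<alpha> - 1))"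
        unfolding kz_def by (rule kz_bound[OF hb that(2)])
      moreover have "G'' p z + G'' p (-z) = kz z * (Rp p z - Rp p (-z))"
        using G'eq[OF pI, of z] G'eq[OF pI, of "-z"] that kzm[of z] by (simp add: algebra_simps)
      ultimately show ?thesis by simp
    qed
    have derG: "((\<lambda>q. G q z) has_real_derivative G'' p z) (at p)" if "p \<in> {c<..<d}" "z \<noteq> 0" for p z
    proof -
      have "p \<in> {a<..<b}" using inI[OF that(1)] unfolding I_def .
      then show ?thesis using dG that(2) unfolding G''_def by simp
    qed
    note pv = PV[OF cd(2,3) \<beta> derG G0 G''0 contG contG' bnd bnd']
    show ?thesis using pv(1)[of q0] pv(2) pv(3) cd contG[of q0] by auto
  qed
  have eq'': "G'' p0 = G' p0" by (auto simp: G''_def G'0)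
  have m0: "a < (a + p0)/2" "(a + p0)/2 < p0" "p0 < (p0 + b)/2" "(p0 + b)/2 < b" using ab by auto
  note mp0 = main[OF m0, unfolded eq'']
  show "\<exists>L. ((\<lambda>\<epsilon>. trunc_int \<epsilon> (G' p0)) \<longlongrightarrow> L) (at_right 0)" using mp0 by blast
  show "((\<lambda>p. pv_torus (G p)) has_real_derivative pv_torus (G' p0)) (at p0)" using mp0 by blast
  show "\<exists>L. ((\<lambda>\<epsilon>. trunc_int \<epsilon> (G p)) \<longlongrightarrow> L) (at_right 0)" if "p \<in> {a<..<b}" for p
  proof -
    have "a < (a + p)/2" "(a + p)/2 < p" "p < (p + b)/2" "(p + b)/2 < b" using that by auto
    from main[OF this] show ?thesis by blast
  qed
  show "continuous_on ({-pi..pi} - {0}) (G p)" if "p \<in> {a<..<b}" for p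
  proof -
    have "a < (a + p)/2" "(a + p)/2 < p" "p < (p + b)/2" "(p + b)/2 < b" using that by auto
    from main[OF this] show ?thesis by blast
  qed
qed



lemma openS: "open ({0<..<(T::real)} \<times> (UNIV::real set))"
  by (intro open_Times open_greaterThanLessThan open_UNIV)

lemma cont_slice_t:
  fixes g :: "real \<Rightarrow> real \<Rightarrow> real"
  assumes "continuous_on ({0<..<T} \<times> UNIV) (\<lambda>(t,x). g t x)" "0 < t1" "t2 < T"
  shows "continuous_on {t1..t2} (\<lambda>s. g s y)"
  by (rule continuous_on_compose2[OF assms(1), of _ "\<lambda>s. (s, y)", simplified])
     (use assms in \<open>auto intro!: continuous_intros\<close>)

lemma schwarz:
  fixes u :: "real \<Rightarrow> real \<Rightarrow> real"
  assumes us: "smooth2_on ({0<..<T} \<times> UNIV) u" and t0: "0 < t0" "t0 < T"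
  shows "dt (dx u) t0 x0 = dx (dt u) t0 x0"
proof -
  define S where "S = {0<..<T} \<times> (UNIV::real set)"
  have oS: "open S" unfolding S_def by (rule openS)
  note uD = smooth2_D[OF oS us[folded S_def]]
  define v where "v = dt u"
  define w where "w = dx v"
  note vD = smooth2_D[OF oS uD(1), folded v_def]
  note wD = smooth2_D[OF oS vD(2), folded w_def]
  note uxD = smooth2_D[OF oS uD(2)]
  define t1 where "t1 = t0 / 2"
  define t2 where "t2 = (t0 + T) / 2"
  have tt: "0 < t1" "t1 < t0" "t0 < t2" "t2 < T" using t0 by (auto simp: t1_def t2_def)
  have cv: "continuous_on S (\<lambda>(t,x). v t x)" by (rule vD(5))
  have cw: "continuous_on S (\<lambda>(t,x). w t x)" by (rule wD(5))
  have step1: "u t y = u t1 y + integral {t1..t} (\<lambda>s. v s y)" if "t1 \<le> t" "t < T" for t y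
  proof -
    have "((\<lambda>s. v s y) has_integral (u t y - u t1 y)) {t1..t}"
    proof (rule fundamental_theorem_of_calculus[OF that(1)])
      fix s assume "s \<in> {t1..t}"
      then have "(s, y) \<in> S" using tt that by (auto simp: S_def)
      then show "((\<lambda>s. u s y) has_vector_derivative v s y) (at s within {t1..t})"
        using uD(3) unfolding v_def has_real_derivative_iff_has_vector_derivative[symmetric]
        by (blast intro: has_field_derivative_at_within)
    qed
    then show ?thesis by (simp add: integral_unique)
  qed
  have step2: "dx u t x0 = dx u t1 x0 + integral {t1..t} (\<lambda>s. w s x0)" if "t1 < t" "t < T" for t
  proof -
    have "((\<lambda>y. integral (cbox t1 t) (\<lambda>s. v s y)) has_field_derivative integral (cbox t1 t) (\<lambda>s. w s x0)) (at x0 within UNIV)"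
    proof (rule leibniz_rule_field_derivative)
      show "((\<lambda>y. v s y) has_field_derivative w s y) (at y within UNIV)" if "s \<in> cbox t1 t" for y s
        using vD(4)[of s y] that tt \<open>t < T\<close> by (auto simp: S_def w_def)
      show "(\<lambda>s. v s y) integrable_on cbox t1 t" for y
        by (simp, rule integrable_continuous_interval, rule cont_slice_t[OF cv[unfolded S_def]])
           (use tt \<open>t < T\<close> in auto)
      have "continuous_on (UNIV \<times> cbox t1 t) (\<lambda>q. (\<lambda>(t,x). w t x) ((\<lambda>(y,s). (s,y)) q))"
        by (rule continuous_on_compose2[OF cw]) (use tt \<open>t < T\<close> in \<open>auto simp: S_def split_beta intro!: continuous_intros\<close>)
      then show "continuous_on (UNIV \<times> cbox t1 t) (\<lambda>(y, s). w s y)" by (simp add: split_beta)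
    qed auto
    then have d1: "((\<lambda>y. u t1 y + integral {t1..t} (\<lambda>s. v s y)) has_real_derivative dx u t1 x0 + integral {t1..t} (\<lambda>s. w s x0)) (at x0)"
      using uD(4)[of t1 x0] tt by (auto simp: S_def intro!: derivative_eq_intros)
    have "(\<lambda>y. u t1 y + integral {t1..t} (\<lambda>s. v s y)) = (\<lambda>y. u t y)"
    proof (rule ext)
      fix y show "u t1 y + integral {t1..t} (\<lambda>s. v s y) = u t y"
        using step1[of t y] that tt by simp
    qed
    with d1 have "((\<lambda>y. u t y) has_real_derivative dx u t1 x0 + integral {t1..t} (\<lambda>s. w s x0)) (at x0)" by simp
    moreover have "((\<lambda>y. u t y) has_real_derivative dx u t x0) (at x0)"
      using uD(4)[of t x0] that tt by (auto simp: S_def)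
    ultimately show ?thesis using DERIV_unique by blast
  qed
  have "((\<lambda>t. integral {t1..t} (\<lambda>s. w s x0)) has_real_derivative w t0 x0) (at t0 within {t1..t2})"
    by (rule integral_has_real_derivative, rule cont_slice_t[OF cw[unfolded S_def]]) (use tt in auto)
  then have "((\<lambda>t. integral {t1..t} (\<lambda>s. w s x0)) has_real_derivative w t0 x0) (at t0)"
    using at_within_Icc_at[of t1 t0 t2] tt by simp
  then have "((\<lambda>t. dx u t1 x0 + integral {t1..t} (\<lambda>s. w s x0)) has_real_derivative w t0 x0) (at t0)"
    by (auto intro!: derivative_eq_intros)
  then have "((\<lambda>t. dx u t x0) has_real_derivative w t0 x0) (at t0)"
    by (rule has_field_derivative_transform_within_open[of _ _ _ "{t1<..<t2}"]) (use tt step2 in auto)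
  moreover have "((\<lambda>t. dx u t x0) has_real_derivative dt (dx u) t0 x0) (at t0)"
    using uxD(3)[of t0 x0] t0 by (auto simp: S_def)
  ultimately show ?thesis using DERIV_unique unfolding w_def v_def by blast
qed



definition Gp :: "(real \<Rightarrow> real) \<Rightarrow> real \<Rightarrow> real \<Rightarrow> real \<Rightarrow> real \<Rightarrow> real \<Rightarrow> real \<Rightarrow> real" where
  "Gp h \<alpha> z D D' B B' = h \<bar>z\<bar> / (\<bar>z\<bar> powr \<alpha> * \<bar>z\<bar>) * ((D' * B - D * B') / (B * B))"

lemma Gderiv:
  fixes D Bf :: "real \<Rightarrow> real"
  assumes "(D has_real_derivative D') (at q)" "(Bf has_real_derivative B') (at q)" "Bf q \<noteq> 0"
  shows "((\<lambda>q. h \<bar>z\<bar> / (\<bar>z\<bar> powr \<alpha> * (\<bar>z\<bar> * Bf q)) * D q) has_real_derivative Gp h \<alpha> z (D q) D' (Bf q) B') (at q)"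
proof -
  have e: "(\<lambda>q. h \<bar>z\<bar> / (\<bar>z\<bar> powr \<alpha> * (\<bar>z\<bar> * Bf q)) * D q) = (\<lambda>q. h \<bar>z\<bar> / (\<bar>z\<bar> powr \<alpha> * \<bar>z\<bar>) * (D q / Bf q))"
    by (rule ext) (simp add: mult.assoc[symmetric])
  show ?thesis unfolding e Gp_def
    by (rule DERIV_cmult, rule DERIV_divide[OF assms])
qed

lemma shift_w:
  fixes g :: "real \<Rightarrow> real"
  assumes "(g has_real_derivative D) (at (c + w))"
  shows "((\<lambda>w. g (c + w)) has_real_derivative D) (at w)"
proof -
  have "((\<lambda>w. c + w) has_real_derivative 1) (at w)" by (auto intro!: derivative_eq_intros)
  from DERIV_chain2[of g D "\<lambda>w. c + w" w 1, OF assms this] show ?thesis by simp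
qed

lemma shift_q:
  fixes g :: "real \<Rightarrow> real"
  assumes "(g has_real_derivative D) (at (q + c))"
  shows "((\<lambda>q. g (q + c)) has_real_derivative D) (at q)"
proof -
  have "((\<lambda>q. q + c) has_real_derivative 1) (at q)" by (auto intro!: derivative_eq_intros)
  from DERIV_chain2[of g D "\<lambda>q. q + c" q 1, OF assms this] show ?thesis by simp
qed

lemma cont_x:
  fixes g :: "real \<Rightarrow> real \<Rightarrow> real"
  assumes "continuous_on ({0<..<T} \<times> UNIV) (\<lambda>(t,x). g t x)" "0 < t0" "t0 < T"
  shows "continuous_on (U \<times> UNIV) (\<lambda>(p,w). g t0 (p + w))"
proof -
  have "continuous_on (U \<times> UNIV) (\<lambda>q. (\<lambda>(t,x). g t x) ((\<lambda>(p,w). (t0, p + w)) q))"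
    by (rule continuous_on_compose2[OF assms(1)]) (use assms in \<open>auto intro!: continuous_intros simp: split_beta\<close>)
  then show ?thesis by (simp add: split_beta)
qed

lemma cont_t:
  fixes g :: "real \<Rightarrow> real \<Rightarrow> real"
  assumes "continuous_on ({0<..<T} \<times> UNIV) (\<lambda>(t,x). g t x)"
  shows "continuous_on ({0<..<T} \<times> UNIV) (\<lambda>(p,w). g p (x0 + w))"
proof -
  have "continuous_on ({0<..<T} \<times> UNIV) (\<lambda>q. (\<lambda>(t,x). g t x) ((\<lambda>(p,w). (p, x0 + w)) q))"
    by (rule continuous_on_compose2[OF assms(1)]) (auto intro!: continuous_intros simp: split_beta)
  then show ?thesis by (simp add: split_beta)
qed

lemma cont_slice_x:
  fixes g :: "real \<Rightarrow> real \<Rightarrow> real"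
  assumes "continuous_on ({0<..<T} \<times> UNIV) (\<lambda>(t,x). g t x)" "0 < t0" "t0 < T"
  shows "continuous_on UNIV (g t0)"
  by (rule continuous_on_compose2[OF assms(1), of _ "\<lambda>x. (t0, x)", simplified])
     (use assms in \<open>auto intro!: continuous_intros\<close>)

lemma Bpos1:
  fixes r :: "real \<Rightarrow> real"
  assumes "continuous_on UNIV r" "\<And>y. r y > 0"
  shows "integral {0..1} (\<lambda>s. r (x + s*z)) > 0"
proof -
  have "continuous_on UNIV ((\<lambda>p w. r (x + w)) p)" for p::real
    by (auto intro!: continuous_intros continuous_on_compose2[OF assms(1)])
  from PI_pos[of "\<lambda>p w. r (x + w)" p, OF this] assms(2) show ?thesis by (simp add: PI_def)
qed

lemma phi_form:
  fixes \<rho> :: "real \<Rightarrow> real \<Rightarrow> real"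
  assumes "continuous_on UNIV (\<rho> t)" "\<And>y. \<rho> t y > 0"
  shows "phi_top h \<alpha> \<rho> t x (x+z) * D = h \<bar>z\<bar> / (\<bar>z\<bar> powr \<alpha> * (\<bar>z\<bar> * integral {0..1} (\<lambda>s. \<rho> t (x + s*z)))) * D"
proof (cases "z = 0")
  case True then show ?thesis by (simp add: phi_top_def)
next
  case False
  have B: "integral {0..1} (\<lambda>s. \<rho> t (x + s*z)) > 0" by (rule Bpos1[OF assms])
  have "d_rho \<rho> t x (x+z) = \<bar>z\<bar> * integral {0..1} (\<lambda>s. \<rho> t (x + s*z))"
    unfolding d_rho_def int_seg[OF False assms(1)] using B by (simp add: abs_mult)
  moreover have "\<bar>x - (x + z)\<bar> = \<bar>z\<bar>" by simp
  ultimately show ?thesis by (simp add: phi_top_def)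
qed



lemma xinst:
  fixes \<rho> f :: "real \<Rightarrow> real \<Rightarrow> real" and h :: "real \<Rightarrow> real" and \<alpha> T t0 x0 :: real
  assumes rs: "smooth2_on ({0<..<T} \<times> UNIV) \<rho>" and fs: "smooth2_on ({0<..<T} \<times> UNIV) f"
    and rp: "\<And>t x. 0 < t \<Longrightarrow> t < T \<Longrightarrow> \<rho> t x > 0"
    and t0: "0 < t0" "t0 < T"
    and hc: "continuous_on UNIV h" and hb: "\<And>r. \<bar>h r\<bar> \<le> 1" and \<alpha>: "0 < \<alpha>" "\<alpha> < 2"
  defines "Gx \<equiv> \<lambda>x z. Gp h \<alpha> z (f t0 (x+z) - f t0 x) (dx f t0 (x+z) - dx f t0 x)
                 (integral {0..1} (\<lambda>s. \<rho> t0 (x + s*z))) (integral {0..1} (\<lambda>s. dx \<rho> t0 (x + s*z)))"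
  shows "\<exists>L. ((\<lambda>\<epsilon>. trunc_int \<epsilon> (\<lambda>z. phi_top h \<alpha> \<rho> t0 x0 (x0+z) * (f t0 (x0+z) - f t0 x0))) \<longlongrightarrow> L) (at_right 0)"
   "((\<lambda>x. pv_torus (\<lambda>z. phi_top h \<alpha> \<rho> t0 x (x+z) * (f t0 (x+z) - f t0 x))) has_real_derivative pv_torus (Gx x0)) (at x0)"
   "\<exists>L. ((\<lambda>\<epsilon>. trunc_int \<epsilon> (Gx x0)) \<longlongrightarrow> L) (at_right 0)"
   "continuous_on ({-pi..pi} - {0}) (\<lambda>z. phi_top h \<alpha> \<rho> t0 x0 (x0+z) * (f t0 (x0+z) - f t0 x0))"
proof -
  define S where "S = {0<..<T} \<times> (UNIV::real set)"
  have oS: "open S" unfolding S_def by (rule openS)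
  have inS: "(t0, y) \<in> S" for y using t0 by (simp add: S_def)
  note r0 = smooth2_D[OF oS rs[folded S_def]]
  note r1 = smooth2_D[OF oS r0(2)]
  note r2 = smooth2_D[OF oS r1(2)]
  note f0 = smooth2_D[OF oS fs[folded S_def]]
  note f1 = smooth2_D[OF oS f0(2)]
  note f2 = smooth2_D[OF oS f1(2)]
  note f3 = smooth2_D[OF oS f2(2)]
  define a where "a = x0 - 1"
  define b where "b = x0 + 1"
  have ab: "a < x0" "x0 < b" by (auto simp: a_def b_def)
  have cx: "continuous_on (U \<times> UNIV) (\<lambda>(p,w). g t0 (p + w))"
    if "continuous_on S (\<lambda>(t,x). g t x)" for g :: "real \<Rightarrow> real \<Rightarrow> real" and U
    by (rule cont_x[OF that[unfolded S_def] t0])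
  have r0c: "continuous_on UNIV (\<rho> t0)" by (rule cont_slice_x[OF r0(5)[unfolded S_def] t0])
  have rpos: "\<rho> t0 y > 0" for y using rp t0 by auto
  define G where "G = (\<lambda>p z. h \<bar>z\<bar> / (\<bar>z\<bar> powr \<alpha> * (\<bar>z\<bar> * integral {0..1} (\<lambda>s. (\<lambda>p w. \<rho> t0 (p + w)) p (s*z))))
      * ((\<lambda>p w. f t0 (p + w)) p z - (\<lambda>p w. f t0 (p + w)) p 0))"
  have Gdef: "G p z = h \<bar>z\<bar> / (\<bar>z\<bar> powr \<alpha> * (\<bar>z\<bar> * integral {0..1} (\<lambda>s. (\<lambda>p w. \<rho> t0 (p + w)) p (s*z))))
      * ((\<lambda>p w. f t0 (p + w)) p z - (\<lambda>p w. f t0 (p + w)) p 0)" for p z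
    by (simp add: G_def)
  have dG: "((\<lambda>q. G q z) has_real_derivative Gx p z) (at p)" if "z \<noteq> 0" for p z
  proof -
    have dD: "((\<lambda>q. f t0 (q + z) - f t0 (q + 0)) has_real_derivative dx f t0 (p + z) - dx f t0 (p + 0)) (at p)"
      by (rule DERIV_diff; rule shift_q; rule f0(4)[OF inS])
    have dB: "((\<lambda>q. PI (\<lambda>p w. \<rho> t0 (p + w)) (\<lambda>s. 1) q z) has_real_derivative PI (\<lambda>p w. dx \<rho> t0 (p + w)) (\<lambda>s. 1) p z) (at p)"
      by (rule PI_dp[where U=UNIV]) (use cx[OF r0(5), of UNIV] cx[OF r1(5), of UNIV] in \<open>auto intro: shift_q r0(4)[OF inS]\<close>)
    have Bn: "PI (\<lambda>p w. \<rho> t0 (p + w)) (\<lambda>s. 1) p z \<noteq> 0"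
      using Bpos1[OF r0c rpos, of p z] by (simp add: PI_def)
    from Gderiv[OF dD dB Bn, of h z \<alpha>]
    show ?thesis by (simp add: G_def Gx_def PI_def)
  qed
  have G'0: "Gx x0 0 = 0" by (simp add: Gx_def Gp_def)
  note gl = GL[where F="\<lambda>p w. f t0 (p + w)" and Fw="\<lambda>p w. dx f t0 (p + w)" and Fww="\<lambda>p w. dx (dx f) t0 (p + w)"
      and Fwp="\<lambda>p w. dx (dx f) t0 (p + w)" and Fwpw="\<lambda>p w. dx (dx (dx f)) t0 (p + w)"
      and P="\<lambda>p w. \<rho> t0 (p + w)" and Pw="\<lambda>p w. dx \<rho> t0 (p + w)" and Pp="\<lambda>p w. dx \<rho> t0 (p + w)"
      and Ppw="\<lambda>p w. dx (dx \<rho>) t0 (p + w)" and G=G and G'=Gx,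
      OF ab hc hb \<alpha> shift_w[OF f0(4)[OF inS]] shift_w[OF f1(4)[OF inS]] shift_q[OF f1(4)[OF inS]]
      shift_w[OF f2(4)[OF inS]] shift_w[OF r0(4)[OF inS]] shift_q[OF r0(4)[OF inS]] shift_w[OF r1(4)[OF inS]]
      cx[OF f1(5)] cx[OF f2(5)] cx[OF f2(5)] cx[OF f3(5)] cx[OF r0(5)] cx[OF r1(5)] cx[OF r1(5)] cx[OF r2(5)]
      rpos Gdef dG G'0]
  have eq: "(\<lambda>z. phi_top h \<alpha> \<rho> t0 p (p+z) * (f t0 (p+z) - f t0 p)) = G p" for p
    by (rule ext) (simp add: phi_form[where \<rho>=\<rho> and t=t0, OF r0c rpos] G_def)
  show "\<exists>L. ((\<lambda>\<epsilon>. trunc_int \<epsilon> (\<lambda>z. phi_top h \<alpha> \<rho> t0 x0 (x0+z) * (f t0 (x0+z) - f t0 x0))) \<longlongrightarrow> L) (at_right 0)"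
    unfolding eq using gl(1) ab by auto
  show "((\<lambda>x. pv_torus (\<lambda>z. phi_top h \<alpha> \<rho> t0 x (x+z) * (f t0 (x+z) - f t0 x))) has_real_derivative pv_torus (Gx x0)) (at x0)"
    unfolding eq using gl(3) by simp
  show "\<exists>L. ((\<lambda>\<epsilon>. trunc_int \<epsilon> (Gx x0)) \<longlongrightarrow> L) (at_right 0)" by (rule gl(2))
  show "continuous_on ({-pi..pi} - {0}) (\<lambda>z. phi_top h \<alpha> \<rho> t0 x0 (x0+z) * (f t0 (x0+z) - f t0 x0))"
    unfolding eq using gl(4) ab by auto
qed

lemma tinst:
  fixes \<rho> :: "real \<Rightarrow> real \<Rightarrow> real" and h :: "real \<Rightarrow> real" and \<alpha> T t0 x0 :: real
  assumes rs: "smooth2_on ({0<..<T} \<times> UNIV) \<rho>"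
    and rp: "\<And>t x. 0 < t \<Longrightarrow> t < T \<Longrightarrow> \<rho> t x > 0"
    and t0: "0 < t0" "t0 < T"
    and hc: "continuous_on UNIV h" and hb: "\<And>r. \<bar>h r\<bar> \<le> 1" and \<alpha>: "0 < \<alpha>" "\<alpha> < 2"
  defines "Gt \<equiv> \<lambda>t z. Gp h \<alpha> z (\<rho> t (x0+z) - \<rho> t x0) (dt \<rho> t (x0+z) - dt \<rho> t x0)
                 (integral {0..1} (\<lambda>s. \<rho> t (x0 + s*z))) (integral {0..1} (\<lambda>s. dt \<rho> t (x0 + s*z)))"
  shows "((\<lambda>t. pv_torus (\<lambda>z. phi_top h \<alpha> \<rho> t x0 (x0+z) * (\<rho> t (x0+z) - \<rho> t x0))) has_real_derivative pv_torus (Gt t0)) (at t0)"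
   "\<exists>L. ((\<lambda>\<epsilon>. trunc_int \<epsilon> (Gt t0)) \<longlongrightarrow> L) (at_right 0)"
proof -
  define S where "S = {0<..<T} \<times> (UNIV::real set)"
  have oS: "open S" unfolding S_def by (rule openS)
  have inS: "p \<in> {0<..<T} \<Longrightarrow> (p, y) \<in> S" for p y by (simp add: S_def)
  note r0 = smooth2_D[OF oS rs[folded S_def]]
  note r1 = smooth2_D[OF oS r0(2)]
  note r2 = smooth2_D[OF oS r1(2)]
  note rt = smooth2_D[OF oS r0(1)]
  note rtx = smooth2_D[OF oS rt(2)]
  note rxt = smooth2_D[OF oS r1(1)]
  note rxtx = smooth2_D[OF oS rxt(2)]
  have ct: "continuous_on ({0<..<T} \<times> UNIV) (\<lambda>(p,w). g p (x0 + w))"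
    if "continuous_on S (\<lambda>(t,x). g t x)" for g :: "real \<Rightarrow> real \<Rightarrow> real"
    by (rule cont_t[OF that[unfolded S_def]])
  have ab: "0 < t0" "t0 < T" using t0 by auto
  define G where "G = (\<lambda>p z. h \<bar>z\<bar> / (\<bar>z\<bar> powr \<alpha> * (\<bar>z\<bar> * integral {0..1} (\<lambda>s. (\<lambda>p w. \<rho> p (x0 + w)) p (s*z))))
      * ((\<lambda>p w. \<rho> p (x0 + w)) p z - (\<lambda>p w. \<rho> p (x0 + w)) p 0))"
  have Gdef: "G p z = h \<bar>z\<bar> / (\<bar>z\<bar> powr \<alpha> * (\<bar>z\<bar> * integral {0..1} (\<lambda>s. (\<lambda>p w. \<rho> p (x0 + w)) p (s*z))))
      * ((\<lambda>p w. \<rho> p (x0 + w)) p z - (\<lambda>p w. \<rho> p (x0 + w)) p 0)" for p z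
    by (simp add: G_def)
  have rc: "continuous_on UNIV (\<rho> p)" if "p \<in> {0<..<T}" for p
    by (rule cont_slice_x[OF r0(5)[unfolded S_def]]) (use that in auto)
  have dG: "((\<lambda>q. G q z) has_real_derivative Gt p z) (at p)" if "p \<in> {0<..<T}" "z \<noteq> 0" for p z
  proof -
    have dD: "((\<lambda>q. \<rho> q (x0 + z) - \<rho> q (x0 + 0)) has_real_derivative dt \<rho> p (x0 + z) - dt \<rho> p (x0 + 0)) (at p)"
      by (rule DERIV_diff; rule r0(3)[OF inS[OF that(1)]])
    have dB: "((\<lambda>q. PI (\<lambda>p w. \<rho> p (x0 + w)) (\<lambda>s. 1) q z) has_real_derivative PI (\<lambda>p w. dt \<rho> p (x0 + w)) (\<lambda>s. 1) p z) (at p)"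
      by (rule PI_dp[where U="{0<..<T}"]) (use that ct[OF r0(5)] ct[OF rt(5)] in \<open>auto intro: r0(3)[OF inS]\<close>)
    have Bn: "PI (\<lambda>p w. \<rho> p (x0 + w)) (\<lambda>s. 1) p z \<noteq> 0"
      using Bpos1[OF rc[OF that(1)], of x0 z] rp that(1) by (simp add: PI_def)
    from Gderiv[OF dD dB Bn, of h z \<alpha>]
    show ?thesis by (simp add: G_def Gt_def PI_def)
  qed
  have G'0: "Gt t0 0 = 0" by (simp add: Gt_def Gp_def)
  have dF: "((\<lambda>w. \<rho> p (x0 + w)) has_real_derivative dx \<rho> p (x0 + w)) (at w)" if "p \<in> {0<..<T}" for p w
    by (rule shift_w, rule r0(4)[OF inS[OF that]])
  have dFw: "((\<lambda>w. dx \<rho> p (x0 + w)) has_real_derivative dx (dx \<rho>) p (x0 + w)) (at w)" if "p \<in> {0<..<T}" for p w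
    by (rule shift_w, rule r1(4)[OF inS[OF that]])
  have dFwp: "((\<lambda>q. dx \<rho> q (x0 + w)) has_real_derivative dt (dx \<rho>) p (x0 + w)) (at p)" if "p \<in> {0<..<T}" for p w
    by (rule r1(3)[OF inS[OF that]])
  have dFwpw: "((\<lambda>w. dt (dx \<rho>) p (x0 + w)) has_real_derivative dx (dt (dx \<rho>)) p (x0 + w)) (at w)" if "p \<in> {0<..<T}" for p w
    by (rule shift_w, rule rxt(4)[OF inS[OF that]])
  have dPp: "((\<lambda>q. \<rho> q (x0 + w)) has_real_derivative dt \<rho> p (x0 + w)) (at p)" if "p \<in> {0<..<T}" for p w
    by (rule r0(3)[OF inS[OF that]])
  have dPpw: "((\<lambda>w. dt \<rho> p (x0 + w)) has_real_derivative dx (dt \<rho>) p (x0 + w)) (at w)" if "p \<in> {0<..<T}" for p w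
    by (rule shift_w, rule rt(4)[OF inS[OF that]])
  have rpos: "\<rho> p (x0 + w) > 0" if "p \<in> {0<..<T}" for p w using rp that by auto
  note gl = GL[where F="\<lambda>p w. \<rho> p (x0 + w)" and Fw="\<lambda>p w. dx \<rho> p (x0 + w)" and Fww="\<lambda>p w. dx (dx \<rho>) p (x0 + w)"
      and Fwp="\<lambda>p w. dt (dx \<rho>) p (x0 + w)" and Fwpw="\<lambda>p w. dx (dt (dx \<rho>)) p (x0 + w)"
      and P="\<lambda>p w. \<rho> p (x0 + w)" and Pw="\<lambda>p w. dx \<rho> p (x0 + w)" and Pp="\<lambda>p w. dt \<rho> p (x0 + w)"
      and Ppw="\<lambda>p w. dx (dt \<rho>) p (x0 + w)" and G=G and G'=Gt,
      OF ab hc hb \<alpha> dF dFw dFwp dFwpw dF dPp dPpw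
      ct[OF r1(5)] ct[OF r2(5)] ct[OF rxt(5)] ct[OF rxtx(5)] ct[OF r0(5)] ct[OF r1(5)] ct[OF rt(5)] ct[OF rtx(5)]
      rpos Gdef dG G'0]
  have eq: "(\<lambda>z. phi_top h \<alpha> \<rho> p x0 (x0+z) * (\<rho> p (x0+z) - \<rho> p x0)) = G p" if "p \<in> {0<..<T}" for p
  proof -
    have "\<rho> p y > 0" for y using rp that by auto
    then show ?thesis by (intro ext) (simp add: phi_form[where \<rho>=\<rho> and t=p, OF rc[OF that]] G_def)
  qed
  show "\<exists>L. ((\<lambda>\<epsilon>. trunc_int \<epsilon> (Gt t0)) \<longlongrightarrow> L) (at_right 0)" by (rule gl(2))
  show "((\<lambda>t. pv_torus (\<lambda>z. phi_top h \<alpha> \<rho> t x0 (x0+z) * (\<rho> t (x0+z) - \<rho> t x0))) has_real_derivative pv_torus (Gt t0)) (at t0)"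
    by (rule has_field_derivative_transform_within_open[OF gl(3), of "{0<..<T}"]) (use eq t0 in auto)
qed



lemma trunc_lin:
  fixes N L :: "real \<Rightarrow> real"
  assumes "continuous_on ({-pi..pi} - {0}) N" "continuous_on ({-pi..pi} - {0}) L" "0 < \<epsilon>" "\<epsilon> \<le> pi"
  shows "trunc_int \<epsilon> (\<lambda>z. N z - c * L z) = trunc_int \<epsilon> N - c * trunc_int \<epsilon> L"
proof -
  have cNL: "continuous_on ({-pi..pi} - {0}) (\<lambda>z. N z - c * L z)"
    by (intro continuous_intros assms)
  have ic: "(\<lambda>z. g z + g (-z)) integrable_on {\<epsilon>..pi}" if "continuous_on ({-pi..pi} - {0}) g" for g :: "real \<Rightarrow> real"
  proof -
    have "continuous_on {\<epsilon>..pi} g" by (rule continuous_on_subset[OF that]) (use assms in auto)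
    moreover have "continuous_on {\<epsilon>..pi} (\<lambda>z. g (-z))"
      by (rule continuous_on_compose2[OF that]) (use assms in \<open>auto intro!: continuous_intros\<close>)
    ultimately show ?thesis by (intro integrable_continuous_interval continuous_intros)
  qed
  have "trunc_int \<epsilon> (\<lambda>z. N z - c * L z) = integral {\<epsilon>..pi} (\<lambda>z. (N z + N (-z)) - c * (L z + L (-z)))"
    unfolding trunc_eq[OF cNL assms(3,4)] by (simp add: algebra_simps)
  also have "\<dots> = integral {\<epsilon>..pi} (\<lambda>z. N z + N (-z)) - c * integral {\<epsilon>..pi} (\<lambda>z. L z + L (-z))"
    by (subst integral_diff) (auto intro: ic[OF assms(1)] integrable_on_mult_right[OF ic[OF assms(2)]])
  also have "\<dots> = trunc_int \<epsilon> N - c * trunc_int \<epsilon> L"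
    using trunc_eq[OF assms(1,3,4)] trunc_eq[OF assms(2,3,4)] by simp
  finally show ?thesis .
qed

lemma pv_neg:
  fixes g :: "real \<Rightarrow> real"
  assumes "((\<lambda>\<epsilon>. trunc_int \<epsilon> g) \<longlongrightarrow> L) (at_right 0)"
  shows "pv_torus (\<lambda>z. - g z) = - pv_torus g"
proof -
  have "((\<lambda>\<epsilon>. trunc_int \<epsilon> (\<lambda>z. - g z)) \<longlongrightarrow> - L) (at_right 0)"
    using tendsto_minus[OF assms] by (simp add: trunc_int_def)
  then show ?thesis unfolding pv_torus_def using assms by (simp add: tendsto_Lim)
qed

lemma smooth_real_cont:
  assumes "smooth_real h"
  shows "continuous_on UNIV h"
proof -
  have "h differentiable (at x)" for x using assms unfolding smooth_real_def
    by (metis funpow_0)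
  then show ?thesis
    by (auto intro!: continuous_at_imp_continuous_on differentiable_imp_continuous_within)
qed

theorem mainTheorem6:
  fixes \<rho> u :: "real \<Rightarrow> real \<Rightarrow> real" and h :: "real \<Rightarrow> real"
    and R0 \<alpha> T :: real
  assumes R0_pos: "R0 > 0"
    and h_smooth: "smooth_real h"
    and h_even: "\<And>r. h (- r) = h r"
    and h_range: "\<And>r. 0 \<le> h r \<and> h r \<le> 1"
    and h_one: "\<And>r. 0 \<le> r \<Longrightarrow> r \<le> R0 \<Longrightarrow> h r = 1"
    and h_zero: "\<And>r. 2 * R0 \<le> r \<Longrightarrow> h r = 0"
    and alpha: "0 < \<alpha>" "\<alpha> < 2"
    and T_pos: "T > 0"
    and rho_smooth: "smooth2_on ({0<..<T} \<times> UNIV) \<rho>"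
    and u_smooth: "smooth2_on ({0<..<T} \<times> UNIV) u"
    and rho_per: "\<And>t x. \<rho> t (x + 2 * pi) = \<rho> t x"
    and u_per: "\<And>t x. u t (x + 2 * pi) = u t x"
    and rho_pos: "\<And>t x. 0 \<le> t \<Longrightarrow> t < T \<Longrightarrow> \<rho> t x > 0"
    and mass: "\<And>t x. 0 < t \<Longrightarrow> t < T \<Longrightarrow>
                 dt \<rho> t x + dx (\<lambda>s y. \<rho> s y * u s y) t x = 0"
    and momentum: "\<And>t x. 0 < t \<Longrightarrow> t < T \<Longrightarrow>
                 ((\<lambda>\<epsilon>. trunc_int \<epsilon>
                     (\<lambda>z. phi_top h \<alpha> \<rho> t x (x + z) * (u t (x + z) - u t x) * \<rho> t (x + z)))
                  \<longlongrightarrow> dt u t x + u t x * dx u t x) (at_right 0)"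
  defines "e \<equiv> (\<lambda>t x. dx u t x + L_op (phi_top h \<alpha> \<rho> t) (\<rho> t) x)"
  defines "q \<equiv> (\<lambda>t x. e t x / \<rho> t x)"
  shows "\<forall>t x. 0 < t \<and> t < T \<longrightarrow>
           (\<exists>D1 D2. ((\<lambda>s. e s x) has_real_derivative D1) (at t)
                  \<and> ((\<lambda>y. u t y * e t y) has_real_derivative D2) (at x)
                  \<and> D1 + D2 = 0)
         \<and> (\<exists>Q1 Q2. ((\<lambda>s. q s x) has_real_derivative Q1) (at t)
                  \<and> ((\<lambda>y. q t y) has_real_derivative Q2) (at x)
                  \<and> Q1 + u t x * Q2 = 0)"
proof (intro allI impI)
  fix t0 x0 assume t0': "0 < t0 \<and> t0 < T"
  have t0: "0 < t0" "t0 < T" using t0' by auto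
  define S where "S = {0<..<T} \<times> (UNIV::real set)"
  have oS: "open S" unfolding S_def by (rule openS)
  have inS: "p \<in> {0<..<T} \<Longrightarrow> (p, y) \<in> S" for p y by (simp add: S_def)
  have inS0: "(t0, y) \<in> S" for y using t0 by (simp add: S_def)
  have hc: "continuous_on UNIV h" by (rule smooth_real_cont[OF h_smooth])
  have hb: "\<bar>h r\<bar> \<le> 1" for r using h_range[of r] by auto
  have rp: "\<rho> t x > 0" if "0 < t" "t < T" for t x using rho_pos that by auto
  define m where "m = (\<lambda>s y. \<rho> s y * u s y)"
  have ms: "smooth2_on ({0<..<T} \<times> UNIV) m"
    unfolding m_def by (rule smooth2_mult[OF openS rho_smooth u_smooth])
  note r0 = smooth2_D[OF oS rho_smooth[folded S_def]]
  note u0 = smooth2_D[OF oS u_smooth[folded S_def]]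
  note ux = smooth2_D[OF oS u0(2)]
  note ut = smooth2_D[OF oS u0(1)]
  note m0 = smooth2_D[OF oS ms[folded S_def]]
  define Lint where "Lint = (\<lambda>t y z. phi_top h \<alpha> \<rho> t y (y+z) * (\<rho> t (y+z) - \<rho> t y))"
  define Nint where "Nint = (\<lambda>t y z. phi_top h \<alpha> \<rho> t y (y+z) * (m t (y+z) - m t y))"
  have eL: "e t y = dx u t y + pv_torus (Lint t y)" for t y
    by (simp add: e_def L_op_def Lint_def)
  have R1: "u t y * e t y = pv_torus (Nint t y) - dt u t y" if "0 < t" "t < T" for t y
  proof -
    note xr = xinst[OF rho_smooth rho_smooth rp that hc hb alpha, where ?x0.0=y]
    note xm = xinst[OF rho_smooth ms rp that hc hb alpha, where ?x0.0=y]
    obtain LL where LL: "((\<lambda>\<epsilon>. trunc_int \<epsilon> (Lint t y)) \<longlongrightarrow> LL) (at_right 0)"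
      using xr(1) unfolding Lint_def by blast
    obtain LN where LN: "((\<lambda>\<epsilon>. trunc_int \<epsilon> (Nint t y)) \<longlongrightarrow> LN) (at_right 0)"
      using xm(1) unfolding Nint_def by blast
    have pL: "pv_torus (Lint t y) = LL" unfolding pv_torus_def by (rule tendsto_Lim[OF _ LL]) simp
    have pN: "pv_torus (Nint t y) = LN" unfolding pv_torus_def by (rule tendsto_Lim[OF _ LN]) simp
    have fe: "(\<lambda>z. phi_top h \<alpha> \<rho> t y (y + z) * (u t (y + z) - u t y) * \<rho> t (y + z)) = (\<lambda>z. Nint t y z - u t y * Lint t y z)"
      by (rule ext) (simp add: Nint_def Lint_def m_def algebra_simps)
    have ev: "\<forall>\<^sub>F \<epsilon> in at_right 0. trunc_int \<epsilon> (Nint t y) - u t y * trunc_int \<epsilon> (Lint t y)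
              = trunc_int \<epsilon> (\<lambda>z. phi_top h \<alpha> \<rho> t y (y + z) * (u t (y + z) - u t y) * \<rho> t (y + z))"
      unfolding fe
      by (rule eventually_at_rightI[of 0 pi])
         (use trunc_lin[OF xm(4)[folded Nint_def] xr(4)[folded Lint_def]] in \<open>auto simp: Nint_def Lint_def\<close>)
    have "((\<lambda>\<epsilon>. trunc_int \<epsilon> (\<lambda>z. phi_top h \<alpha> \<rho> t y (y + z) * (u t (y + z) - u t y) * \<rho> t (y + z))) \<longlongrightarrow> LN - u t y * LL) (at_right 0)"
      by (rule Lim_transform_eventually[OF _ ev]) (intro tendsto_intros LN LL)
    with momentum[OF that, of y] have "dt u t y + u t y * dx u t y = LN - u t y * LL"
      using tendsto_unique[OF trivial_limit_at_right_real] by blast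
    then show ?thesis using pL pN eL[of t y] by (simp add: algebra_simps)
  qed
  note xr = xinst[OF rho_smooth rho_smooth rp t0 hc hb alpha, where ?x0.0=x0]
  note xm = xinst[OF rho_smooth ms rp t0 hc hb alpha, where ?x0.0=x0]
  define Gt where "Gt = (\<lambda>t z. Gp h \<alpha> z (\<rho> t (x0+z) - \<rho> t x0) (dt \<rho> t (x0+z) - dt \<rho> t x0)
                 (integral {0..1} (\<lambda>s. \<rho> t (x0 + s*z))) (integral {0..1} (\<lambda>s. dt \<rho> t (x0 + s*z))))"
  define Gxr where "Gxr = (\<lambda>x z. Gp h \<alpha> z (\<rho> t0 (x+z) - \<rho> t0 x) (dx \<rho> t0 (x+z) - dx \<rho> t0 x)
                 (integral {0..1} (\<lambda>s. \<rho> t0 (x + s*z))) (integral {0..1} (\<lambda>s. dx \<rho> t0 (x + s*z))))"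
  define Gxm where "Gxm = (\<lambda>x z. Gp h \<alpha> z (m t0 (x+z) - m t0 x) (dx m t0 (x+z) - dx m t0 x)
                 (integral {0..1} (\<lambda>s. \<rho> t0 (x + s*z))) (integral {0..1} (\<lambda>s. dx \<rho> t0 (x + s*z))))"
  note xr = xr[folded Gxr_def] and xm = xm[folded Gxm_def]
  have rp': "\<And>t x. 0 < t \<Longrightarrow> t < T \<Longrightarrow> \<rho> t x > 0" using rp by blast
  have tr1: "((\<lambda>t. pv_torus (\<lambda>z. phi_top h \<alpha> \<rho> t x0 (x0+z) * (\<rho> t (x0+z) - \<rho> t x0))) has_real_derivative pv_torus (Gt t0)) (at t0)"
    unfolding Gt_def by (rule tinst(1)[OF rho_smooth rp' t0 hc hb alpha])
  have tr2: "\<exists>L. ((\<lambda>\<epsilon>. trunc_int \<epsilon> (Gt t0)) \<longlongrightarrow> L) (at_right 0)"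
    unfolding Gt_def by (rule tinst(2)[OF rho_smooth rp' t0 hc hb alpha])
  have mass': "dt \<rho> t0 y = - dx m t0 y" for y using mass[OF t0, of y] by (simp add: m_def)
  have ident: "Gxm x0 z = - Gt t0 z" for z
  proof (cases "z = 0")
    case True then show ?thesis by (simp add: Gxm_def Gt_def Gp_def)
  next
    case False
    define B where "B = integral {0..1} (\<lambda>s. \<rho> t0 (x0 + s*z))"
    define Btt where "Btt = integral {0..1} (\<lambda>s. dt \<rho> t0 (x0 + s*z))"
    define Bx where "Bx = integral {0..1} (\<lambda>s. dx \<rho> t0 (x0 + s*z))"
    define Dr where "Dr = \<rho> t0 (x0+z) - \<rho> t0 x0"
    define Dm where "Dm = m t0 (x0+z) - m t0 x0"
    define Drt where "Drt = dt \<rho> t0 (x0+z) - dt \<rho> t0 x0"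
    define Dmx where "Dmx = dx m t0 (x0+z) - dx m t0 x0"
    have e1: "Drt = - Dmx" by (simp add: Drt_def Dmx_def mass')
    have dm: "((\<lambda>w. m t0 (x0 + w)) has_real_derivative dx m t0 (x0 + w)) (at w)" for w
      by (rule shift_w, rule m0(4)[OF inS0])
    have dr: "((\<lambda>w. \<rho> t0 (x0 + w)) has_real_derivative dx \<rho> t0 (x0 + w)) (at w)" for w
      by (rule shift_w, rule r0(4)[OF inS0])
    have sm: "m t0 (x0 + z) - m t0 (x0 + 0) = z * integral {0..1} (\<lambda>s. dx m t0 (x0 + s*z))"
      using seg_ftc[where f="\<lambda>w. m t0 (x0 + w)" and f'="\<lambda>w. dx m t0 (x0 + w)", OF dm, of z] by simp
    have sr: "\<rho> t0 (x0 + z) - \<rho> t0 (x0 + 0) = z * integral {0..1} (\<lambda>s. dx \<rho> t0 (x0 + s*z))"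
      using seg_ftc[where f="\<lambda>w. \<rho> t0 (x0 + w)" and f'="\<lambda>w. dx \<rho> t0 (x0 + w)", OF dr, of z] by simp
    have e2: "z * Btt = - Dm" using sm by (simp add: Btt_def Dm_def mass')
    have e3: "z * Bx = Dr" using sr by (simp add: Bx_def Dr_def)
    have "z * (Dr * Btt + Dm * Bx) = Dr * (z * Btt) + Dm * (z * Bx)" by (simp add: algebra_simps)
    also have "\<dots> = Dr * (- Dm) + Dm * Dr" using e2 e3 by simp
    also have "\<dots> = 0" by simp
    finally have "z * (Dr * Btt + Dm * Bx) = 0" .
    then have e4: "Dr * Btt + Dm * Bx = 0" using False by simp
    have num: "(Drt * B - Dr * Btt) + (Dmx * B - Dm * Bx) = 0"
      using e1 e4 by (simp add: algebra_simps)
    have "Gxm x0 z + Gt t0 z = Gp h \<alpha> z Dm Dmx B Bx + Gp h \<alpha> z Dr Drt B Btt"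
      by (simp add: Gxm_def Gt_def Dm_def Dmx_def B_def Bx_def Dr_def Drt_def Btt_def)
    also have "\<dots> = h \<bar>z\<bar> / (\<bar>z\<bar> powr \<alpha> * \<bar>z\<bar>) * (((Drt * B - Dr * Btt) + (Dmx * B - Dm * Bx)) / (B * B))"
      unfolding Gp_def by (simp add: add_divide_distrib distrib_left)
    also have "\<dots> = 0" using num by simp
    finally show ?thesis by simp
  qed
  obtain Lt where Lt: "((\<lambda>\<epsilon>. trunc_int \<epsilon> (Gt t0)) \<longlongrightarrow> Lt) (at_right 0)" using tr2 by blast
  have pvid: "pv_torus (Gxm x0) = - pv_torus (Gt t0)"
  proof -
    have "Gxm x0 = (\<lambda>z. - Gt t0 z)" using ident by auto
    then show ?thesis using pv_neg[OF Lt] by simp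
  qed
  define D1 where "D1 = dt (dx u) t0 x0 + pv_torus (Gt t0)"
  define D2 where "D2 = pv_torus (Gxm x0) - dx (dt u) t0 x0"
  define Ex where "Ex = dx (dx u) t0 x0 + pv_torus (Gxr x0)"
  have dD1: "((\<lambda>s. e s x0) has_real_derivative D1) (at t0)"
  proof -
    have "((\<lambda>s. dx u s x0 + pv_torus (Lint s x0)) has_real_derivative D1) (at t0)"
      unfolding D1_def Lint_def by (intro DERIV_add ux(3)[OF inS0] tr1)
    then show ?thesis by (simp add: eL)
  qed
  have dD2: "((\<lambda>y. u t0 y * e t0 y) has_real_derivative D2) (at x0)"
  proof -
    have "((\<lambda>y. pv_torus (Nint t0 y) - dt u t0 y) has_real_derivative D2) (at x0)"
    proof -
      have "((\<lambda>x. pv_torus (\<lambda>z. phi_top h \<alpha> \<rho> t0 x (x + z) * (m t0 (x + z) - m t0 x))) has_real_derivative pv_torus (Gxm x0)) (at x0)"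
        unfolding Gxm_def by (rule xinst(2)[OF rho_smooth ms rp' t0 hc hb alpha])
      then show ?thesis unfolding D2_def Nint_def by (intro DERIV_diff ut(4)[OF inS0])
    qed
    moreover have "(\<lambda>y. u t0 y * e t0 y) = (\<lambda>y. pv_torus (Nint t0 y) - dt u t0 y)"
      using R1[OF t0] by auto
    ultimately show ?thesis by simp
  qed
  have dEx: "((\<lambda>y. e t0 y) has_real_derivative Ex) (at x0)"
  proof -
    have "((\<lambda>y. dx u t0 y + pv_torus (Lint t0 y)) has_real_derivative Ex) (at x0)"
    proof -
      have "((\<lambda>x. pv_torus (\<lambda>z. phi_top h \<alpha> \<rho> t0 x (x + z) * (\<rho> t0 (x + z) - \<rho> t0 x))) has_real_derivative pv_torus (Gxr x0)) (at x0)"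
        unfolding Gxr_def by (rule xinst(2)[OF rho_smooth rho_smooth rp' t0 hc hb alpha])
      then show ?thesis unfolding Ex_def Lint_def by (intro DERIV_add ux(4)[OF inS0])
    qed
    then show ?thesis by (simp add: eL)
  qed
  have sw: "dt (dx u) t0 x0 = dx (dt u) t0 x0" by (rule schwarz[OF u_smooth t0])
  have D12: "D1 + D2 = 0" unfolding D1_def D2_def using sw pvid by simp
  have D2p: "D2 = dx u t0 x0 * e t0 x0 + Ex * u t0 x0"
    using DERIV_unique[OF dD2 DERIV_mult[OF u0(4)[OF inS0] dEx]] .
  have dxm: "dx m t0 x0 = dx \<rho> t0 x0 * u t0 x0 + dx u t0 x0 * \<rho> t0 x0"
  proof -
    have "((\<lambda>y. m t0 y) has_real_derivative dx \<rho> t0 x0 * u t0 x0 + dx u t0 x0 * \<rho> t0 x0) (at x0)"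
      using DERIV_mult[OF r0(4)[OF inS0] u0(4)[OF inS0]] by (simp add: m_def)
    then show ?thesis using m0(4)[OF inS0] DERIV_unique by blast
  qed
  have rn: "\<rho> t0 x0 \<noteq> 0" using rp[OF t0, of x0] by simp
  have dQ1: "((\<lambda>s. q s x0) has_real_derivative (D1 * \<rho> t0 x0 - e t0 x0 * dt \<rho> t0 x0) / (\<rho> t0 x0 * \<rho> t0 x0)) (at t0)"
    unfolding q_def by (rule DERIV_divide[OF dD1 r0(3)[OF inS0] rn])
  have dQ2: "((\<lambda>y. q t0 y) has_real_derivative (Ex * \<rho> t0 x0 - e t0 x0 * dx \<rho> t0 x0) / (\<rho> t0 x0 * \<rho> t0 x0)) (at x0)"
    unfolding q_def by (rule DERIV_divide[OF dEx r0(4)[OF inS0] rn])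
  have mass0: "dt \<rho> t0 x0 = - (dx \<rho> t0 x0 * u t0 x0 + dx u t0 x0 * \<rho> t0 x0)"
    using mass'[of x0] dxm by simp
  have qsum: "(D1 * \<rho> t0 x0 - e t0 x0 * dt \<rho> t0 x0) / (\<rho> t0 x0 * \<rho> t0 x0)
      + u t0 x0 * ((Ex * \<rho> t0 x0 - e t0 x0 * dx \<rho> t0 x0) / (\<rho> t0 x0 * \<rho> t0 x0)) = 0"
  proof -
    have D1e: "D1 = - (dx u t0 x0 * e t0 x0 + Ex * u t0 x0)" using D12 D2p by simp
    have "(D1 * \<rho> t0 x0 - e t0 x0 * dt \<rho> t0 x0) + u t0 x0 * (Ex * \<rho> t0 x0 - e t0 x0 * dx \<rho> t0 x0) = 0"
      unfolding D1e mass0 by (simp add: algebra_simps)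
    moreover have "(D1 * \<rho> t0 x0 - e t0 x0 * dt \<rho> t0 x0) / (\<rho> t0 x0 * \<rho> t0 x0)
      + u t0 x0 * ((Ex * \<rho> t0 x0 - e t0 x0 * dx \<rho> t0 x0) / (\<rho> t0 x0 * \<rho> t0 x0))
      = ((D1 * \<rho> t0 x0 - e t0 x0 * dt \<rho> t0 x0) + u t0 x0 * (Ex * \<rho> t0 x0 - e t0 x0 * dx \<rho> t0 x0)) / (\<rho> t0 x0 * \<rho> t0 x0)"
      by (simp only: add_divide_distrib times_divide_eq_right)
    ultimately show ?thesis by simp
  qed
  show "(\<exists>D1 D2. ((\<lambda>s. e s x0) has_real_derivative D1) (at t0)
                  \<and> ((\<lambda>y. u t0 y * e t0 y) has_real_derivative D2) (at x0)
                  \<and> D1 + D2 = 0)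
         \<and> (\<exists>Q1 Q2. ((\<lambda>s. q s x0) has_real_derivative Q1) (at t0)
                  \<and> ((\<lambda>y. q t0 y) has_real_derivative Q2) (at x0)
                  \<and> Q1 + u t0 x0 * Q2 = 0)"
    using dD1 dD2 D12 dQ1 dQ2 qsum by blast
qed


end
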